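(* Let $d>2$ and let $J_x,J_y$ be the generators of rotations in the irreducible spin-$J$ representation of $SU(2)$ on a $d$-dimensional Hilbert space, so $d=2J+1$. Let $h$ be a traceless Hermitian operator on this space such that there exists $q\in\{-2,\dots,2\}$ with $\mathrm{Tr}\big(h\,T^{(2)}_q\big)\neq 0$. Then the Lie algebra generated by $\{J_x,J_y,h\}$ is $\mathfrak{su}(d)$.
   Context: For the spin-$J$ representation with basis $\{|J,m\rangle\}_{m=-J}^{J}$, the irreducible spherical tensor operators are $T^{(k)}_q(J)=\sqrt{\frac{2k+1}{2J+1}}\sum_m \langle J,m+q|k,q;J,m\rangle\,|J,m+q\rangle\langle J,m|$ for $0\le k\le 2J$, $-k\le q\le k$, where $\langle J,m+q|k,q;J,m\rangle$ are Clebsch–Gordan coefficients; they form an orthonormal operator basis for the trace inner product. "The Lie algebra generated by a set of Hermitian operators $\{H_1,\dots,H_n\}$" means the smallest real vector space of operators containing $-iH_1,\dots,-iH_n$ and closed under commutators; $\mathfrak{su}(d)$ is the Lie algebra of traceless anti-Hermitian $d\times d$ matrices. *)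

theory Defs
  imports Complex_Main "Jordan_Normal_Form.Matrix"
begin

definition dagger :: "complex mat \<Rightarrow> complex mat" where
  "dagger A = mat (dim_col A) (dim_row A) (\<lambda>(i,j). cnj (A $$ (j,i)))"

definition hermitian :: "complex mat \<Rightarrow> bool" where
  "hermitian A \<longleftrightarrow> dagger A = A"

definition trace :: "complex mat \<Rightarrow> complex" where
  "trace A = (\<Sum>i<dim_row A. A $$ (i,i))"

text \<open>Clebsch--Gordan coefficient <j1 m1; j2 m2 | j m> (Racah formula, Condon--Shortley
  convention), for real (half-)integer arguments; zero when the labels are not admissible.\<close>
definition rfact :: "real \<Rightarrow> real" where
  "rfact x = fact (nat \<lfloor>x\<rfloor>)"

definition clebsch_gordan :: "real \<Rightarrow> real \<Rightarrow> real \<Rightarrow> real \<Rightarrow> real \<Rightarrow> real \<Rightarrow> real" where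
  "clebsch_gordan j1 m1 j2 m2 j m =
    (if m = m1 + m2 \<and> \<bar>m1\<bar> \<le> j1 \<and> \<bar>m2\<bar> \<le> j2 \<and> \<bar>m\<bar> \<le> j
        \<and> \<bar>j1 - j2\<bar> \<le> j \<and> j \<le> j1 + j2 \<and> j1 + j2 + j \<in> \<int>
        \<and> j1 - m1 \<in> \<int> \<and> j1 + m1 \<in> \<int> \<and> j2 - m2 \<in> \<int> \<and> j2 + m2 \<in> \<int>
        \<and> j - m \<in> \<int> \<and> j + m \<in> \<int>
     then sqrt ((2*j + 1) * rfact (j + j1 - j2) * rfact (j - j1 + j2) * rfact (j1 + j2 - j)
                / rfact (j1 + j2 + j + 1))
        * sqrt (rfact (j + m) * rfact (j - m) * rfact (j1 - m1) * rfact (j1 + m1)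
                * rfact (j2 - m2) * rfact (j2 + m2))
        * (\<Sum>t\<in>{t\<in>{0..nat \<lfloor>j1 + j2 - j\<rfloor>}.
                 real t \<le> j1 - m1 \<and> real t \<le> j2 + m2 \<and>
                 0 \<le> j - j2 + m1 + real t \<and> 0 \<le> j - j1 - m2 + real t}.
             (-1) ^ t / (fact t * rfact (j1 + j2 - j - real t) * rfact (j1 - m1 - real t)
                 * rfact (j2 + m2 - real t) * rfact (j - j2 + m1 + real t)
                 * rfact (j - j1 - m2 + real t)))
     else 0)"

text \<open>Spin-J representation on C^d, d = 2J+1.  Basis index i < d corresponds to
  |J, m_i> with m_i = i - J.\<close>
definition spinJ :: "nat \<Rightarrow> real" where
  "spinJ d = (real d - 1) / 2"

definition mval :: "nat \<Rightarrow> nat \<Rightarrow> real" where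
  "mval d i = real i - spinJ d"

definition Jplus :: "nat \<Rightarrow> complex mat" where
  "Jplus d = mat d d (\<lambda>(i,j). if i = j + 1 then
      complex_of_real (sqrt (spinJ d * (spinJ d + 1) - mval d j * (mval d j + 1))) else 0)"

definition Jminus :: "nat \<Rightarrow> complex mat" where
  "Jminus d = dagger (Jplus d)"

definition Jx :: "nat \<Rightarrow> complex mat" where
  "Jx d = (1/2 :: complex) \<cdot>\<^sub>m (Jplus d + Jminus d)"

definition Jy :: "nat \<Rightarrow> complex mat" where
  "Jy d = (1/(2*\<i>) :: complex) \<cdot>\<^sub>m (Jplus d - Jminus d)"

definition spin_tensor :: "nat \<Rightarrow> nat \<Rightarrow> int \<Rightarrow> complex mat" where
  "spin_tensor d k q = mat d d (\<lambda>(i,j).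
     if mval d i = mval d j + of_int q then
       complex_of_real (sqrt ((2 * real k + 1) / (2 * spinJ d + 1))
         * clebsch_gordan (real k) (of_int q) (spinJ d) (mval d j) (spinJ d) (mval d i))
     else 0)"

inductive_set lie_generated :: "nat \<Rightarrow> complex mat set \<Rightarrow> complex mat set"
  for d :: nat and S :: "complex mat set" where
  gen: "A \<in> S \<Longrightarrow> A \<in> lie_generated d S"
| zero: "0\<^sub>m d d \<in> lie_generated d S"
| add: "A \<in> lie_generated d S \<Longrightarrow> B \<in> lie_generated d S \<Longrightarrow> A + B \<in> lie_generated d S"
| scale: "A \<in> lie_generated d S \<Longrightarrow> complex_of_real r \<cdot>\<^sub>m A \<in> lie_generated d S"
| bracket: "A \<in> lie_generated d S \<Longrightarrow> B \<in> lie_generated d S \<Longrightarrow>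
            A * B - B * A \<in> lie_generated d S"

definition su :: "nat \<Rightarrow> complex mat set" where
  "su d = {A \<in> carrier_mat d d. dagger A = - A \<and> trace A = 0}"

end

theory Submission
  imports Defs
begin


lemma mult_entry:
  assumes "A \<in> carrier_mat d d" "B \<in> carrier_mat d d" "i < d" "j < d"
  shows "(A * B) $$ (i,j) = (\<Sum>k<d. A $$ (i,k) * B $$ (k,j))"
  using assms by (simp add: scalar_prod_def atLeast0LessThan)

definition lieC :: "nat \<Rightarrow> complex mat set \<Rightarrow> bool" where
  "lieC d M \<longleftrightarrow> M \<subseteq> carrier_mat d d \<and> 0\<^sub>m d d \<in> M \<and> (\<forall>A\<in>M. \<forall>B\<in>M. A + B \<in> M)
     \<and> (\<forall>c. \<forall>A\<in>M. c \<cdot>\<^sub>m A \<in> M) \<and> (\<forall>A\<in>M. \<forall>B\<in>M. A * B - B * A \<in> M)"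

lemma lie_gen_carrier:
  assumes "S \<subseteq> carrier_mat d d"
  shows "lie_generated d S \<subseteq> carrier_mat d d"
proof
  fix A assume "A \<in> lie_generated d S"
  then show "A \<in> carrier_mat d d"
    by induct (use assms in auto)
qed

definition LCx :: "nat \<Rightarrow> complex mat set \<Rightarrow> complex mat set" where
  "LCx d S = {X + \<i> \<cdot>\<^sub>m Y | X Y. X \<in> lie_generated d S \<and> Y \<in> lie_generated d S}"

lemma lieC_LCx:
  assumes S: "S \<subseteq> carrier_mat d d"
  shows "lieC d (LCx d S)"
proof -
  let ?L = "lie_generated d S"
  have car: "\<And>A. A \<in> ?L \<Longrightarrow> A \<in> carrier_mat d d" using lie_gen_carrier[OF S] by auto
  have neg: "\<And>A. A \<in> ?L \<Longrightarrow> - A \<in> ?L"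
  proof -
    fix A assume a: "A \<in> ?L"
    have "complex_of_real (-1) \<cdot>\<^sub>m A \<in> ?L" using a by (rule lie_generated.scale)
    moreover have "complex_of_real (-1) \<cdot>\<^sub>m A = - A" using car[OF a] by (intro eq_matI) auto
    ultimately show "- A \<in> ?L" by simp
  qed
  have sub: "\<And>A B. A \<in> ?L \<Longrightarrow> B \<in> ?L \<Longrightarrow> A - B \<in> ?L"
  proof -
    fix A B assume a: "A \<in> ?L" "B \<in> ?L"
    have "A + - B \<in> ?L" using a neg by (intro lie_generated.add) auto
    moreover have "A + - B = A - B" using car a by (intro eq_matI) auto
    ultimately show "A - B \<in> ?L" by simp
  qed
  have C1: "LCx d S \<subseteq> carrier_mat d d" unfolding LCx_def using car by auto
  have C2: "0\<^sub>m d d \<in> LCx d S" unfolding LCx_def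
    by (rule CollectI, rule exI[of _ "0\<^sub>m d d"], rule exI[of _ "0\<^sub>m d d"])
       (auto intro!: eq_matI lie_generated.zero)
  have C3: "\<forall>A\<in>LCx d S. \<forall>B\<in>LCx d S. A + B \<in> LCx d S"
  proof (intro ballI)
    fix A B assume "A \<in> LCx d S" "B \<in> LCx d S"
    then obtain X1 Y1 X2 Y2 where h: "A = X1 + \<i> \<cdot>\<^sub>m Y1" "B = X2 + \<i> \<cdot>\<^sub>m Y2"
      "X1 \<in> ?L" "Y1 \<in> ?L" "X2 \<in> ?L" "Y2 \<in> ?L" unfolding LCx_def by auto
    have "A + B = (X1 + X2) + \<i> \<cdot>\<^sub>m (Y1 + Y2)"
      using h car[of X1] car[of X2] car[of Y1] car[of Y2]
      by (intro eq_matI) (auto simp: algebra_simps)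
    then show "A + B \<in> LCx d S" unfolding LCx_def using h
      by (auto intro!: lie_generated.add)
  qed
  have C4: "\<forall>c. \<forall>A\<in>LCx d S. c \<cdot>\<^sub>m A \<in> LCx d S"
  proof (intro allI ballI)
    fix c A assume "A \<in> LCx d S"
    then obtain X1 Y1 where h: "A = X1 + \<i> \<cdot>\<^sub>m Y1"
      "X1 \<in> ?L" "Y1 \<in> ?L" unfolding LCx_def by auto
    let ?X = "complex_of_real (Re c) \<cdot>\<^sub>m X1 - complex_of_real (Im c) \<cdot>\<^sub>m Y1"
    let ?Y = "complex_of_real (Im c) \<cdot>\<^sub>m X1 + complex_of_real (Re c) \<cdot>\<^sub>m Y1"
    have key: "\<And>x y. c * (x + \<i> * y) = (complex_of_real (Re c) * x - complex_of_real (Im c) * y)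
        + \<i> * (complex_of_real (Im c) * x + complex_of_real (Re c) * y)"
    proof -
      fix x y
      have "c * (x + \<i> * y) = (complex_of_real (Re c) + \<i> * complex_of_real (Im c)) * (x + \<i> * y)"
        by (subst complex_eq[of c]) simp
      also have "\<dots> = (complex_of_real (Re c) * x - complex_of_real (Im c) * y)
        + \<i> * (complex_of_real (Im c) * x + complex_of_real (Re c) * y)"
        by (simp add: algebra_simps)
      finally show "c * (x + \<i> * y) = (complex_of_real (Re c) * x - complex_of_real (Im c) * y)
        + \<i> * (complex_of_real (Im c) * x + complex_of_real (Re c) * y)" .
    qed
    have "c \<cdot>\<^sub>m A = ?X + \<i> \<cdot>\<^sub>m ?Y"
      using h car[of X1] car[of Y1]
      by (intro eq_matI) (simp_all add: key)
    moreover have "?X \<in> ?L" "?Y \<in> ?L" using h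
      by (auto intro!: sub lie_generated.add lie_generated.scale)
    ultimately show "c \<cdot>\<^sub>m A \<in> LCx d S" unfolding LCx_def by blast
  qed
  have C5: "\<forall>A\<in>LCx d S. \<forall>B\<in>LCx d S. A * B - B * A \<in> LCx d S"
  proof (intro ballI)
    fix A B assume "A \<in> LCx d S" "B \<in> LCx d S"
    then obtain X1 Y1 X2 Y2 where h: "A = X1 + \<i> \<cdot>\<^sub>m Y1" "B = X2 + \<i> \<cdot>\<^sub>m Y2"
      "X1 \<in> ?L" "Y1 \<in> ?L" "X2 \<in> ?L" "Y2 \<in> ?L" unfolding LCx_def by auto
    note c = car[OF h(3)] car[OF h(4)] car[OF h(5)] car[OF h(6)]
    let ?X = "(X1 * X2 - X2 * X1) - (Y1 * Y2 - Y2 * Y1)"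
    let ?Y = "(X1 * Y2 - Y2 * X1) + (Y1 * X2 - X2 * Y1)"
    have "A * B - B * A = ?X + \<i> \<cdot>\<^sub>m ?Y"
    proof (rule eq_matI)
      fix i j assume ij: "i < dim_row (?X + \<i> \<cdot>\<^sub>m ?Y)" "j < dim_col (?X + \<i> \<cdot>\<^sub>m ?Y)"
      then have ij': "i < d" "j < d" using c by auto
      have AB: "A \<in> carrier_mat d d" "B \<in> carrier_mat d d" using h c by auto
      have eA: "\<And>k. k < d \<Longrightarrow> A $$ (i,k) = X1 $$ (i,k) + \<i> * Y1 $$ (i,k)"
        "\<And>k. k < d \<Longrightarrow> A $$ (k,j) = X1 $$ (k,j) + \<i> * Y1 $$ (k,j)"
        "\<And>k. k < d \<Longrightarrow> B $$ (i,k) = X2 $$ (i,k) + \<i> * Y2 $$ (i,k)"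
        "\<And>k. k < d \<Longrightarrow> B $$ (k,j) = X2 $$ (k,j) + \<i> * Y2 $$ (k,j)"
        using h c ij' by auto
      have "(A * B - B * A) $$ (i, j) = (\<Sum>k<d. A $$ (i,k) * B $$ (k,j)) - (\<Sum>k<d. B $$ (i,k) * A $$ (k,j))"
        using AB ij' by (simp add: scalar_prod_def atLeast0LessThan)
      also have "\<dots> = (\<Sum>k<d. (X1 $$ (i,k) + \<i> * Y1 $$ (i,k)) * (X2 $$ (k,j) + \<i> * Y2 $$ (k,j)))
          - (\<Sum>k<d. (X2 $$ (i,k) + \<i> * Y2 $$ (i,k)) * (X1 $$ (k,j) + \<i> * Y1 $$ (k,j)))"
        by (simp add: eA)
      also have "\<dots> = (?X + \<i> \<cdot>\<^sub>m ?Y) $$ (i, j)"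
        using ij' c
        by (simp add: scalar_prod_def atLeast0LessThan algebra_simps sum.distrib sum_subtractf sum_distrib_left)
      finally show "(A * B - B * A) $$ (i, j) = (?X + \<i> \<cdot>\<^sub>m ?Y) $$ (i, j)" .
    qed (use c h in auto)
    moreover have "?X \<in> ?L" "?Y \<in> ?L" using h
      by (auto intro!: sub lie_generated.add lie_generated.bracket)
    ultimately show "A * B - B * A \<in> LCx d S" unfolding LCx_def by blast
  qed
  show ?thesis unfolding lieC_def using C1 C2 C3 C4 C5 by blast
qed


lemma dagger_carrier[simp]: "dagger A \<in> carrier_mat (dim_col A) (dim_row A)"
  by (simp add: dagger_def)
lemma dagger_dims[simp]: "dim_row (dagger A) = dim_col A" "dim_col (dagger A) = dim_row A"
  by (simp_all add: dagger_def)
lemma dagger_index[simp]: "i < dim_col A \<Longrightarrow> j < dim_row A \<Longrightarrow> dagger A $$ (i,j) = cnj (A $$ (j,i))"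
  by (simp add: dagger_def)

lemma trace_add: "A \<in> carrier_mat d d \<Longrightarrow> B \<in> carrier_mat d d \<Longrightarrow> trace (A + B) = trace A + trace B"
  by (simp add: trace_def sum.distrib)
lemma trace_smult: "A \<in> carrier_mat d d \<Longrightarrow> trace (c \<cdot>\<^sub>m A) = c * trace A"
  by (simp add: trace_def sum_distrib_left)
lemma trace_comm: assumes "A \<in> carrier_mat d d" "B \<in> carrier_mat d d"
  shows "trace (A * B - B * A) = 0"
proof -
  have "trace (A * B - B * A) = (\<Sum>i<d. \<Sum>k<d. A $$ (i,k) * B $$ (k,i)) - (\<Sum>i<d. \<Sum>k<d. B $$ (i,k) * A $$ (k,i))"
    using assms by (simp add: trace_def scalar_prod_def atLeast0LessThan sum_subtractf)
  also have "(\<Sum>i<d. \<Sum>k<d. B $$ (i,k) * A $$ (k,i)) = (\<Sum>i<d. \<Sum>k<d. A $$ (i,k) * B $$ (k,i))"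
    by (subst sum.swap) (simp add: mult.commute)
  finally show ?thesis by simp
qed

lemma dagger_add: "A \<in> carrier_mat d d \<Longrightarrow> B \<in> carrier_mat d d \<Longrightarrow> dagger (A + B) = dagger A + dagger B"
  by (intro eq_matI) auto
lemma dagger_smult_real: "A \<in> carrier_mat d d \<Longrightarrow> dagger (complex_of_real r \<cdot>\<^sub>m A) = complex_of_real r \<cdot>\<^sub>m dagger A"
  by (intro eq_matI) auto
lemma dagger_mult: assumes "A \<in> carrier_mat d d" "B \<in> carrier_mat d d"
  shows "dagger (A * B) = dagger B * dagger A"
  using assms by (intro eq_matI) (auto simp: scalar_prod_def mult.commute)
lemma dagger_minus: "A \<in> carrier_mat d d \<Longrightarrow> B \<in> carrier_mat d d \<Longrightarrow> dagger (A - B) = dagger A - dagger B"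
  by (intro eq_matI) auto

lemma su_bracket:
  assumes "A \<in> su d" "B \<in> su d" shows "A * B - B * A \<in> su d"
proof -
  have c: "A \<in> carrier_mat d d" "B \<in> carrier_mat d d" "dagger A = - A" "dagger B = - B"
    using assms by (auto simp: su_def)
  have m: "A * B \<in> carrier_mat d d" "B * A \<in> carrier_mat d d" using c by auto
  have "dagger (A * B - B * A) = dagger (A * B) - dagger (B * A)"
    by (rule dagger_minus[OF m])
  also have "\<dots> = dagger B * dagger A - dagger A * dagger B"
    using c(1,2) by (simp add: dagger_mult)
  also have "\<dots> = (- B) * (- A) - (- A) * (- B)" by (simp only: c(3,4))
  also have "\<dots> = - (A * B - B * A)"
    using c(1,2) by (intro eq_matI) (auto simp: scalar_prod_def sum_negf)
  finally show ?thesis using c trace_comm[OF c(1,2)] by (auto simp: su_def)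
qed

lemma L_sub_su:
  assumes "S \<subseteq> su d" shows "lie_generated d S \<subseteq> su d"
proof
  fix A assume "A \<in> lie_generated d S"
  then show "A \<in> su d"
  proof induct
    case (gen A) then show ?case using assms by auto
  next
    case zero then show ?case by (auto simp: su_def trace_def intro!: eq_matI)
  next
    case (add A B) then show ?case
      by (auto simp: su_def dagger_add trace_add intro!: eq_matI)
  next
    case (scale A r) then show ?case
      by (auto simp: su_def dagger_smult_real trace_smult intro!: eq_matI)
  next
    case (bracket A B) then show ?case by (blast intro: su_bracket)
  qed
qed

definition aa :: "nat \<Rightarrow> nat \<Rightarrow> complex" where
  "aa d j = complex_of_real (sqrt (spinJ d * (spinJ d + 1) - mval d j * (mval d j + 1)))"

lemma Jplus_carrier[simp]: "Jplus d \<in> carrier_mat d d" by (simp add: Jplus_def)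
lemma Jminus_carrier[simp]: "Jminus d \<in> carrier_mat d d" by (simp add: Jminus_def Jplus_def dagger_def)
lemma Jplus_idx: "i < d \<Longrightarrow> j < d \<Longrightarrow> Jplus d $$ (i,j) = (if i = j + 1 then aa d j else 0)"
  by (simp add: Jplus_def aa_def)
lemma cnj_aa[simp]: "cnj (aa d j) = aa d j" by (simp add: aa_def)
lemma Jminus_idx: "i < d \<Longrightarrow> j < d \<Longrightarrow> Jminus d $$ (i,j) = (if j = i + 1 then aa d i else 0)"
  by (simp add: Jminus_def dagger_def Jplus_def aa_def)
lemma J_dims[simp]: "dim_row (Jplus d) = d" "dim_col (Jplus d) = d" "dim_row (Jminus d) = d" "dim_col (Jminus d) = d"
  using Jplus_carrier Jminus_carrier by (metis carrier_matD(1), metis carrier_matD(2),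
    metis carrier_matD(1), metis carrier_matD(2))
lemma Jx_carrier[simp]: "Jx d \<in> carrier_mat d d" by (simp add: Jx_def)
lemma Jy_carrier[simp]: "Jy d \<in> carrier_mat d d"
  using Jplus_carrier[of d] Jminus_carrier[of d] unfolding Jy_def by (metis minus_carrier_mat smult_carrier_mat)
lemma Jxy_dims[simp]: "dim_row (Jx d) = d" "dim_col (Jx d) = d" "dim_row (Jy d) = d" "dim_col (Jy d) = d"
  using Jx_carrier Jy_carrier by (metis carrier_matD(1), metis carrier_matD(2),
    metis carrier_matD(1), metis carrier_matD(2))
lemma dagger_smult: "dagger (c \<cdot>\<^sub>m A) = cnj c \<cdot>\<^sub>m dagger A"
  by (intro eq_matI) auto
lemma Jx_idx: "i < d \<Longrightarrow> j < d \<Longrightarrow> Jx d $$ (i,j) =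
   (if i = j + 1 then aa d j / 2 else if j = i + 1 then aa d i / 2 else 0)"
proof -
  assume a: "i < d" "j < d"
  have "Jx d $$ (i,j) = (1/2) * (Jplus d $$ (i,j) + Jminus d $$ (i,j))" using a by (simp add: Jx_def)
  also have "\<dots> = (if i = j + 1 then aa d j / 2 else if j = i + 1 then aa d i / 2 else 0)"
    using a by (simp add: Jplus_idx Jminus_idx)
  finally show ?thesis .
qed
lemma Jy_idx: "i < d \<Longrightarrow> j < d \<Longrightarrow> Jy d $$ (i,j) =
   (if i = j + 1 then aa d j / (2*\<i>) else if j = i + 1 then - aa d i / (2*\<i>) else 0)"
proof -
  assume a: "i < d" "j < d"
  have "Jy d $$ (i,j) = (1/(2*\<i>)) * (Jplus d $$ (i,j) - Jminus d $$ (i,j))" using a by (simp add: Jy_def)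
  also have "\<dots> = (if i = j + 1 then aa d j / (2*\<i>) else if j = i + 1 then - aa d i / (2*\<i>) else 0)"
    using a by (simp add: Jplus_idx Jminus_idx)
  finally show ?thesis .
qed

lemma Jx_su: "- \<i> \<cdot>\<^sub>m Jx d \<in> su d"
proof -
  have "dagger (- \<i> \<cdot>\<^sub>m Jx d) = - (- \<i> \<cdot>\<^sub>m Jx d)"
  proof (rule eq_matI)
    fix i j assume "i < dim_row (- (- \<i> \<cdot>\<^sub>m Jx d))" "j < dim_col (- (- \<i> \<cdot>\<^sub>m Jx d))"
    then have ij: "i < d" "j < d" by auto
    show "dagger (- \<i> \<cdot>\<^sub>m Jx d) $$ (i, j) = (- (- \<i> \<cdot>\<^sub>m Jx d)) $$ (i, j)"
      using ij by (simp add: dagger_smult Jx_idx aa_def)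
  qed auto
  moreover have "trace (- \<i> \<cdot>\<^sub>m Jx d) = 0" by (simp add: trace_def Jx_idx)
  ultimately show ?thesis unfolding su_def by simp
qed
lemma Jy_su: "- \<i> \<cdot>\<^sub>m Jy d \<in> su d"
proof -
  have "dagger (- \<i> \<cdot>\<^sub>m Jy d) = - (- \<i> \<cdot>\<^sub>m Jy d)"
  proof (rule eq_matI)
    fix i j assume "i < dim_row (- (- \<i> \<cdot>\<^sub>m Jy d))" "j < dim_col (- (- \<i> \<cdot>\<^sub>m Jy d))"
    then have ij: "i < d" "j < d" by auto
    show "dagger (- \<i> \<cdot>\<^sub>m Jy d) $$ (i, j) = (- (- \<i> \<cdot>\<^sub>m Jy d)) $$ (i, j)"
      using ij by (simp add: dagger_smult Jy_idx aa_def field_simps)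
  qed auto
  moreover have "trace (- \<i> \<cdot>\<^sub>m Jy d) = 0" by (simp add: trace_def Jy_idx)
  ultimately show ?thesis unfolding su_def by simp
qed
lemma h_su: assumes "h \<in> carrier_mat d d" "hermitian h" "trace h = 0"
  shows "- \<i> \<cdot>\<^sub>m h \<in> su d"
proof -
  have "dagger h = h" using assms by (simp add: hermitian_def)
  then have e: "\<And>i j. i < d \<Longrightarrow> j < d \<Longrightarrow> cnj (h $$ (j,i)) = h $$ (i,j)"
    using assms(1) by (metis carrier_matD(1) carrier_matD(2) dagger_index)
  have "trace (- \<i> \<cdot>\<^sub>m h) = - \<i> * trace h" using assms(1) by (rule trace_smult)
  then have t: "trace (- \<i> \<cdot>\<^sub>m h) = 0" using assms(3) by simp
  show ?thesis unfolding su_def using assms(1) e t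
    by (auto intro!: eq_matI)
qed


definition dmat :: "nat \<Rightarrow> (nat \<Rightarrow> complex) \<Rightarrow> complex mat" where
  "dmat d g = mat d d (\<lambda>(i,j). if i = j then g i else 0)"

definition emat :: "nat \<Rightarrow> nat \<Rightarrow> nat \<Rightarrow> complex mat" where
  "emat d a b = mat d d (\<lambda>(i,j). if i = a \<and> j = b then 1 else 0)"

lemma dmat_carrier[simp]: "dmat d g \<in> carrier_mat d d" by (simp add: dmat_def)
lemma dmat_dims[simp]: "dim_row (dmat d g) = d" "dim_col (dmat d g) = d" by (simp_all add: dmat_def)
lemma emat_dims[simp]: "dim_row (emat d a b) = d" "dim_col (emat d a b) = d" by (simp_all add: emat_def)
lemma emat_carrier[simp]: "emat d a b \<in> carrier_mat d d" by (simp add: emat_def)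


lemma comm_diag_entry:
  assumes "X \<in> carrier_mat d d" "i < d" "j < d"
  shows "(dmat d g * X - X * dmat d g) $$ (i,j) = (g i - g j) * X $$ (i,j)"
proof -
  have "(dmat d g * X) $$ (i,j) = (\<Sum>k<d. (if i = k then g i else 0) * X $$ (k,j))"
    using assms by (simp add: scalar_prod_def atLeast0LessThan dmat_def)
  also have "\<dots> = (\<Sum>k<d. if k = i then g i * X $$ (i,j) else 0)"
    by (rule sum.cong) auto
  also have "\<dots> = g i * X $$ (i,j)" using assms(2) by simp
  finally have 1: "(dmat d g * X) $$ (i,j) = g i * X $$ (i,j)" .
  have "(X * dmat d g) $$ (i,j) = (\<Sum>k<d. X $$ (i,k) * (if k = j then g k else 0))"
    using assms by (simp add: scalar_prod_def atLeast0LessThan dmat_def)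
  also have "\<dots> = (\<Sum>k<d. if k = j then X $$ (i,j) * g j else 0)"
    by (rule sum.cong) auto
  also have "\<dots> = X $$ (i,j) * g j" using assms(3) by simp
  finally have 2: "(X * dmat d g) $$ (i,j) = X $$ (i,j) * g j" .
  show ?thesis using assms 1 2 by (simp add: algebra_simps)
qed

lemma lieC_carrier: "lieC d M \<Longrightarrow> A \<in> M \<Longrightarrow> A \<in> carrier_mat d d"
  unfolding lieC_def by auto
lemma lieC_add: "lieC d M \<Longrightarrow> A \<in> M \<Longrightarrow> B \<in> M \<Longrightarrow> A + B \<in> M"
  unfolding lieC_def by auto
lemma lieC_smult: "lieC d M \<Longrightarrow> A \<in> M \<Longrightarrow> c \<cdot>\<^sub>m A \<in> M"
  unfolding lieC_def by auto
lemma lieC_comm: "lieC d M \<Longrightarrow> A \<in> M \<Longrightarrow> B \<in> M \<Longrightarrow> A * B - B * A \<in> M"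
  unfolding lieC_def by auto
lemma lieC_zero: "lieC d M \<Longrightarrow> 0\<^sub>m d d \<in> M"
  unfolding lieC_def by auto

lemma lieC_lincomb:
  assumes "lieC d M" "A \<in> M" "B \<in> M"
  shows "a \<cdot>\<^sub>m A + b \<cdot>\<^sub>m B \<in> M"
  using assms by (intro lieC_add lieC_smult)

lemma lieC_mat_eq:
  assumes "lieC d M" "A \<in> M" "B \<in> carrier_mat d d" "\<And>i j. i < d \<Longrightarrow> j < d \<Longrightarrow> B $$ (i,j) = A $$ (i,j)"
  shows "B \<in> M"
proof -
  have "A \<in> carrier_mat d d" using assms lieC_carrier by blast
  then have "B = A" using assms(3,4) by (intro eq_matI) auto
  then show ?thesis using assms(2) by simp
qed

lemma proj_lemma:
  assumes M: "lieC d M" and D: "dmat d g \<in> M" and X: "X \<in> M"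
  shows "mat d d (\<lambda>(i,j). if g i - g j = lam then X $$ (i,j) else 0) \<in> M"
proof -
  have Xc: "X \<in> carrier_mat d d" using M X lieC_carrier by blast
  have step: "\<And>S. finite S \<Longrightarrow> mat d d (\<lambda>(i,j). X $$ (i,j) * (\<Prod>\<mu>\<in>S. g i - g j - \<mu>)) \<in> M"
  proof -
    fix S :: "complex set" assume "finite S"
    then show "mat d d (\<lambda>(i,j). X $$ (i,j) * (\<Prod>\<mu>\<in>S. g i - g j - \<mu>)) \<in> M"
    proof induct
      case empty
      show ?case by (rule lieC_mat_eq[OF M X]) auto
    next
      case (insert \<mu> S)
      let ?Y = "mat d d (\<lambda>(i,j). X $$ (i,j) * (\<Prod>\<mu>\<in>S. g i - g j - \<mu>))"
      have Yc: "?Y \<in> carrier_mat d d" by simp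
      have "(dmat d g * ?Y - ?Y * dmat d g) + (- \<mu>) \<cdot>\<^sub>m ?Y \<in> M"
        using insert(3) M D by (intro lieC_add lieC_smult lieC_comm)
      then show ?case
      proof (rule lieC_mat_eq[OF M])
        fix i j assume ij: "i < d" "j < d"
        have e: "(dmat d g * ?Y - ?Y * dmat d g) $$ (i,j) = (g i - g j) * ?Y $$ (i,j)"
          by (rule comm_diag_entry[OF Yc ij])
        have "((dmat d g * ?Y - ?Y * dmat d g) + (- \<mu>) \<cdot>\<^sub>m ?Y) $$ (i,j)
           = (dmat d g * ?Y - ?Y * dmat d g) $$ (i,j) + (- \<mu>) * ?Y $$ (i,j)"
          using ij by simp
        also have "\<dots> = (g i - g j - \<mu>) * ?Y $$ (i,j)" unfolding e by (simp add: algebra_simps)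
        also have "\<dots> = mat d d (\<lambda>(i,j). X $$ (i,j) * (\<Prod>\<mu>\<in>insert \<mu> S. g i - g j - \<mu>)) $$ (i,j)"
          using ij insert(1,2) by simp
        finally show "mat d d (\<lambda>(i,j). X $$ (i,j) * (\<Prod>\<mu>\<in>insert \<mu> S. g i - g j - \<mu>)) $$ (i,j)
          = ((dmat d g * ?Y - ?Y * dmat d g) + (- \<mu>) \<cdot>\<^sub>m ?Y) $$ (i,j)" by simp
      qed simp
    qed
  qed
  define L where "L = (\<lambda>(i,j). g i - g j) ` ({..<d} \<times> {..<d}) - {lam}"
  have fL: "finite L" unfolding L_def by auto
  define c where "c = (\<Prod>\<mu>\<in>L. lam - \<mu>)"
  have c0: "c \<noteq> 0" unfolding c_def using fL by (auto simp: L_def)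
  have YM: "(1 / c) \<cdot>\<^sub>m mat d d (\<lambda>(i,j). X $$ (i,j) * (\<Prod>\<mu>\<in>L. g i - g j - \<mu>)) \<in> M"
    using step[OF fL] M by (rule lieC_smult[rotated])
  show ?thesis
  proof (rule lieC_mat_eq[OF M YM])
    fix i j assume ij: "i < d" "j < d"
    show "mat d d (\<lambda>(i,j). if g i - g j = lam then X $$ (i,j) else 0) $$ (i,j) =
      ((1 / c) \<cdot>\<^sub>m mat d d (\<lambda>(i,j). X $$ (i,j) * (\<Prod>\<mu>\<in>L. g i - g j - \<mu>))) $$ (i,j)"
    proof (cases "g i - g j = lam")
      case True then show ?thesis using ij c0 by (simp add: c_def)
    next
      case False
      then have "g i - g j \<in> L" unfolding L_def using ij by auto
      then have "(\<Prod>\<mu>\<in>L. g i - g j - \<mu>) = 0" using fL by (intro prod_zero) auto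
      then show ?thesis using ij False by simp
    qed
  qed simp
qed


declare index_mult_mat(1)[simp del]

lemma emat_mult_entry:
  assumes "a < d" "b < d" "c < d" "e < d" "i < d" "j < d"
  shows "(emat d a b * emat d c e) $$ (i,j) = (if i = a \<and> j = e \<and> b = c then 1 else 0)"
proof -
  have "(emat d a b * emat d c e) $$ (i,j) = (\<Sum>k<d. (if i = a \<and> k = b then 1 else 0) * (if k = c \<and> j = e then 1 else 0))"
    using assms by (simp add: mult_entry[OF emat_carrier emat_carrier]) (simp add: emat_def)
  also have "\<dots> = (\<Sum>k<d. if k = b then (if i = a \<and> b = c \<and> j = e then 1 else 0) else 0)"
    by (rule sum.cong) auto
  also have "\<dots> = (if i = a \<and> j = e \<and> b = c then 1 else 0)" using assms by auto
  finally show ?thesis .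
qed

lemma emat_idx: "i < d \<Longrightarrow> j < d \<Longrightarrow> emat d a b $$ (i,j) = (if i = a \<and> j = b then 1 else 0)"
  by (simp add: emat_def)

lemma comm_entry: "A \<in> carrier_mat d d \<Longrightarrow> B \<in> carrier_mat d d \<Longrightarrow> i < d \<Longrightarrow> j < d \<Longrightarrow>
  (A * B - B * A) $$ (i,j) = (A * B) $$ (i,j) - (B * A) $$ (i,j)"
  by (metis carrier_matD(1) carrier_matD(2) index_minus_mat(1) index_mult_mat(2) index_mult_mat(3))

lemma emat_comm_entry:
  assumes "a < d" "b < d" "c < d" "e < d" "i < d" "j < d"
  shows "(emat d a b * emat d c e - emat d c e * emat d a b) $$ (i,j) =
     (if i = a \<and> j = e \<and> b = c then 1 else 0) - (if i = c \<and> j = b \<and> e = a then 1 else 0)"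
  using assms by (simp add: comm_entry[OF emat_carrier emat_carrier] emat_mult_entry)

lemma emat_lower:
  assumes M: "lieC d M" and adj: "\<And>k. k + 1 < d \<Longrightarrow> emat d (k+1) k \<in> M"
  shows "j + n + 1 < d \<Longrightarrow> emat d (j + n + 1) j \<in> M"
proof (induct n arbitrary: j)
  case 0 then show ?case using adj by simp
next
  case (Suc n)
  have a: "emat d (j+n+2) (j+n+1) \<in> M" using adj[of "j+n+1"] Suc(2) by (simp add: add.assoc)
  have b: "emat d (j+n+1) j \<in> M" using Suc by simp
  have "emat d (j+n+2) (j+n+1) * emat d (j+n+1) j - emat d (j+n+1) j * emat d (j+n+2) (j+n+1) \<in> M" (is "?A \<in> M")
    using a b M by (rule lieC_comm[rotated 1])
  then show ?case
  proof (rule lieC_mat_eq[OF M])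
    fix i j' assume ij: "i < d" "j' < d"
    then show "emat d (j + Suc n + 1) j $$ (i, j') = ?A $$ (i, j')" using Suc(2)
      by (subst emat_comm_entry) (auto simp: emat_idx)
  qed simp
qed

lemma emat_upper:
  assumes M: "lieC d M" and adj: "\<And>k. k + 1 < d \<Longrightarrow> emat d k (k+1) \<in> M"
  shows "j + n + 1 < d \<Longrightarrow> emat d j (j + n + 1) \<in> M"
proof (induct n arbitrary: j)
  case 0 then show ?case using adj by simp
next
  case (Suc n)
  have a: "emat d (j+n+1) (j+n+2) \<in> M" using adj[of "j+n+1"] Suc(2) by (simp add: add.assoc)
  have b: "emat d j (j+n+1) \<in> M" using Suc by simp
  have "emat d j (j+n+1) * emat d (j+n+1) (j+n+2) - emat d (j+n+1) (j+n+2) * emat d j (j+n+1) \<in> M" (is "?A \<in> M")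
    using b a M by (rule lieC_comm[rotated 1])
  then show ?case
  proof (rule lieC_mat_eq[OF M])
    fix i j' assume ij: "i < d" "j' < d"
    then show "emat d j (j + Suc n + 1) $$ (i, j') = ?A $$ (i, j')" using Suc(2)
      by (subst emat_comm_entry) (auto simp: emat_idx)
  qed simp
qed

lemma emat_all:
  assumes M: "lieC d M" and adj: "\<And>k. k + 1 < d \<Longrightarrow> emat d (k+1) k \<in> M"
     "\<And>k. k + 1 < d \<Longrightarrow> emat d k (k+1) \<in> M"
     and ij: "i < d" "j < d" "i \<noteq> j"
  shows "emat d i j \<in> M"
proof (cases "j < i")
  case True
  then obtain n where "i = j + n + 1" using less_imp_Suc_add by fastforce
  then show ?thesis using emat_lower[OF M adj(1)] ij by auto
next
  case False
  then have "i < j" using ij by auto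
  then obtain n where "j = i + n + 1" using less_imp_Suc_add by fastforce
  then show ?thesis using emat_upper[OF M adj(2)] ij by auto
qed

lemma sl_gen:
  assumes M: "lieC d M" and adj: "\<And>k. k + 1 < d \<Longrightarrow> emat d (k+1) k \<in> M"
     "\<And>k. k + 1 < d \<Longrightarrow> emat d k (k+1) \<in> M"
     and A: "A \<in> carrier_mat d d" "trace A = 0" and d0: "0 < d"
  shows "A \<in> M"
proof -
  have E: "\<And>i j. i < d \<Longrightarrow> j < d \<Longrightarrow> i \<noteq> j \<Longrightarrow> emat d i j \<in> M"
    using emat_all[OF M adj] by blast
  define OD where "OD = {(i,j). i < d \<and> j < d \<and> i \<noteq> j}"
  have off: "\<And>P. finite P \<Longrightarrow> P \<subseteq> OD \<Longrightarrow> mat d d (\<lambda>q. if q \<in> P then A $$ q else 0) \<in> M"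
  proof -
    fix P :: "(nat \<times> nat) set" assume "finite P" "P \<subseteq> OD"
    then show "mat d d (\<lambda>q. if q \<in> P then A $$ q else 0) \<in> M"
    proof (induct)
      case empty
      show ?case by (rule lieC_mat_eq[OF M lieC_zero[OF M]]) auto
    next
      case (insert p P)
      obtain a b where p: "p = (a,b)" by fastforce
      have ab: "a < d" "b < d" "a \<noteq> b" using insert(4) p by (auto simp: OD_def)
      have "mat d d (\<lambda>q. if q \<in> P then A $$ q else 0) + A $$ (a,b) \<cdot>\<^sub>m emat d a b \<in> M"
        using insert ab by (intro lieC_add[OF M] lieC_smult[OF M] E) auto
      then show ?case
        by (rule lieC_mat_eq[OF M]) (use insert(2) p in \<open>auto simp: emat_idx\<close>)
    qed
  qed
  have diag: "\<And>K. finite K \<Longrightarrow> K \<subseteq> {1..<d} \<Longrightarrow> mat d d (\<lambda>(i,j). if i = j then (if i \<in> K then A $$ (i,i)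
       else if i = 0 then - (\<Sum>k\<in>K. A $$ (k,k)) else 0) else 0) \<in> M"
  proof -
    fix K :: "nat set" assume "finite K" "K \<subseteq> {1..<d}"
    then show "mat d d (\<lambda>(i,j). if i = j then (if i \<in> K then A $$ (i,i)
       else if i = 0 then - (\<Sum>k\<in>K. A $$ (k,k)) else 0) else 0) \<in> M"
    proof (induct)
      case empty
      show ?case by (rule lieC_mat_eq[OF M lieC_zero[OF M]]) auto
    next
      case (insert k K)
      have k: "k < d" "k \<noteq> 0" using insert(4) by auto
      have "emat d k 0 * emat d 0 k - emat d 0 k * emat d k 0 \<in> M"
        using k d0 by (intro lieC_comm[OF M] E) auto
      then have "mat d d (\<lambda>(i,j). if i = j then (if i \<in> K then A $$ (i,i)
       else if i = 0 then - (\<Sum>k\<in>K. A $$ (k,k)) else 0) else 0)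
          + A $$ (k,k) \<cdot>\<^sub>m (emat d k 0 * emat d 0 k - emat d 0 k * emat d k 0) \<in> M"
        using insert by (intro lieC_add[OF M] lieC_smult[OF M]) auto
      then show ?case
      proof (rule lieC_mat_eq[OF M])
        fix i j assume ij: "i < d" "j < d"
        show "mat d d (\<lambda>(i,j). if i = j then (if i \<in> insert k K then A $$ (i,i)
          else if i = 0 then - (\<Sum>k\<in>insert k K. A $$ (k,k)) else 0) else 0) $$ (i,j) =
          (mat d d (\<lambda>(i,j). if i = j then (if i \<in> K then A $$ (i,i)
          else if i = 0 then - (\<Sum>k\<in>K. A $$ (k,k)) else 0) else 0)
          + A $$ (k,k) \<cdot>\<^sub>m (emat d k 0 * emat d 0 k - emat d 0 k * emat d k 0)) $$ (i,j)"
          using ij k d0 insert(1,2,4) by (subst index_add_mat, simp, simp, subst index_smult_mat, simp, simp,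
             subst emat_comm_entry) auto
      qed simp
    qed
  qed
  have fOD: "finite OD"
    by (rule finite_subset[of _ "{..<d} \<times> {..<d}"]) (auto simp: OD_def)
  have M1: "mat d d (\<lambda>q. if q \<in> OD then A $$ q else 0) \<in> M"
    by (rule off[OF fOD]) simp
  have M2: "mat d d (\<lambda>(i,j). if i = j then (if i \<in> {1..<d} then A $$ (i,i)
       else if i = 0 then - (\<Sum>k\<in>{1..<d}. A $$ (k,k)) else 0) else 0) \<in> M"
    by (rule diag) auto
  have tr: "(\<Sum>k<d. A $$ (k,k)) = 0" using A by (simp add: trace_def)
  have tr2: "A $$ (0,0) = - (\<Sum>k\<in>{1..<d}. A $$ (k,k))"
  proof -
    have "{..<d} = insert 0 {1..<d}" using d0 by auto
    then have "(\<Sum>k<d. A $$ (k,k)) = A $$ (0,0) + (\<Sum>k\<in>{1..<d}. A $$ (k,k))" by simp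
    then show ?thesis using tr by (simp add: eq_neg_iff_add_eq_0)
  qed
  have "mat d d (\<lambda>q. if q \<in> OD then A $$ q else 0) + mat d d (\<lambda>(i,j). if i = j then (if i \<in> {1..<d} then A $$ (i,i)
       else if i = 0 then - (\<Sum>k\<in>{1..<d}. A $$ (k,k)) else 0) else 0) \<in> M"
    using M1 M2 by (rule lieC_add[OF M])
  then show ?thesis
  proof (rule lieC_mat_eq[OF M])
    fix i j assume ij: "i < d" "j < d"
    show "A $$ (i,j) = (mat d d (\<lambda>q. if q \<in> OD then A $$ q else 0) + mat d d (\<lambda>(i,j). if i = j then (if i \<in> {1..<d} then A $$ (i,i)
       else if i = 0 then - (\<Sum>k\<in>{1..<d}. A $$ (k,k)) else 0) else 0)) $$ (i,j)"
      using ij tr2 by (cases "i = j"; cases "i = 0") (auto simp: OD_def)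
  qed (use A in simp)
qed


lemma aa_sq: assumes "k < d" shows "aa d k * aa d k = of_nat ((d - 1 - k) * (k + 1))"
proof -
  have t: "\<And>r s::real. (r - 1)/2 * ((r-1)/2 + 1) - (s - (r-1)/2) * (s - (r-1)/2 + 1) = (r - 1 - s) * (s + 1)"
    by (simp add: field_simps)
  have r: "real (d - 1 - k) = real d - 1 - real k" using assms by (simp add: of_nat_diff)
  have e: "spinJ d * (spinJ d + 1) - mval d k * (mval d k + 1) = real ((d - 1 - k) * (k + 1))"
    unfolding spinJ_def mval_def of_nat_mult r using t by simp
  define n where "n = (d - 1 - k) * (k + 1)"
  have a: "aa d k = complex_of_real (sqrt (real n))" unfolding aa_def e n_def by (rule refl)
  have "aa d k * aa d k = complex_of_real (sqrt (real n) * sqrt (real n))"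
    unfolding a of_real_mult by (rule refl)
  also have "\<dots> = of_nat n"
    by (simp only: real_sqrt_mult_self abs_of_nat of_real_of_nat_eq)
  finally show ?thesis unfolding n_def .
qed

lemma aa_nz: assumes "k + 1 < d" shows "aa d k \<noteq> 0"
proof
  assume "aa d k = 0"
  then have "(of_nat ((d - 1 - k) * (k + 1)) :: complex) = 0" using aa_sq[of k d] assms by simp
  then have "(d - 1 - k) * (k + 1) = 0" by (simp only: of_nat_eq_0_iff)
  then show False using assms by simp
qed

lemma sum_one_nz:
  fixes d :: nat
  assumes "k < d" "\<And>l. l < d \<Longrightarrow> l \<noteq> k \<Longrightarrow> f l = 0"
  shows "(\<Sum>l<d. f l) = (f k :: complex)"
proof -
  have "(\<Sum>l<d. f l) = (\<Sum>l<d. if l = k then f k else 0)"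
    using assms by (intro sum.cong) auto
  also have "\<dots> = f k" using assms(1) by (subst sum.delta) auto
  finally show ?thesis .
qed

lemma Jp_mult: assumes "X \<in> carrier_mat d d" "i < d" "j < d"
  shows "(Jplus d * X) $$ (i,j) = (if i \<ge> 1 then aa d (i-1) * X $$ (i-1,j) else 0)"
proof -
  have "(Jplus d * X) $$ (i,j) = (\<Sum>k<d. Jplus d $$ (i,k) * X $$ (k,j))"
    using assms by (simp add: mult_entry)
  also have "\<dots> = (\<Sum>k<d. (if i = k + 1 then aa d k else 0) * X $$ (k,j))"
    using assms by (intro sum.cong) (auto simp: Jplus_idx)
  also have "\<dots> = (if i \<ge> 1 then aa d (i-1) * X $$ (i-1,j) else 0)"
  proof (cases "i \<ge> 1")
    case True then show ?thesis using assms by (subst sum_one_nz[of "i-1"]) auto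
  next
    case False then show ?thesis by simp
  qed
  finally show ?thesis .
qed

lemma mult_Jp: assumes "X \<in> carrier_mat d d" "i < d" "j < d"
  shows "(X * Jplus d) $$ (i,j) = (if j + 1 < d then X $$ (i,j+1) * aa d j else 0)"
proof -
  have "(X * Jplus d) $$ (i,j) = (\<Sum>k<d. X $$ (i,k) * Jplus d $$ (k,j))"
    using assms by (simp add: mult_entry)
  also have "\<dots> = (\<Sum>k<d. X $$ (i,k) * (if k = j + 1 then aa d j else 0))"
    using assms by (intro sum.cong) (auto simp: Jplus_idx)
  also have "\<dots> = (if j + 1 < d then X $$ (i,j+1) * aa d j else 0)"
  proof (cases "j + 1 < d")
    case True then show ?thesis using assms by (subst sum_one_nz[of "j+1"]) auto
  next
    case False
    have "(\<Sum>k<d. X $$ (i,k) * (if k = j + 1 then aa d j else 0)) = 0"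
      by (rule sum.neutral) (use False in auto)
    then show ?thesis using False by simp
  qed
  finally show ?thesis .
qed

lemma Jm_mult: assumes "X \<in> carrier_mat d d" "i < d" "j < d"
  shows "(Jminus d * X) $$ (i,j) = (if i + 1 < d then aa d i * X $$ (i+1,j) else 0)"
proof -
  have "(Jminus d * X) $$ (i,j) = (\<Sum>k<d. Jminus d $$ (i,k) * X $$ (k,j))"
    using assms by (simp add: mult_entry)
  also have "\<dots> = (\<Sum>k<d. (if k = i + 1 then aa d i else 0) * X $$ (k,j))"
    using assms by (intro sum.cong) (auto simp: Jminus_idx)
  also have "\<dots> = (if i + 1 < d then aa d i * X $$ (i+1,j) else 0)"
  proof (cases "i + 1 < d")
    case True then show ?thesis using assms by (subst sum_one_nz[of "i+1"]) auto
  next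
    case False
    have "(\<Sum>k<d. (if k = i + 1 then aa d i else 0) * X $$ (k,j)) = 0"
      by (rule sum.neutral) (use False in auto)
    then show ?thesis using False by simp
  qed
  finally show ?thesis .
qed

lemma mult_Jm: assumes "X \<in> carrier_mat d d" "i < d" "j < d"
  shows "(X * Jminus d) $$ (i,j) = (if j \<ge> 1 then X $$ (i,j-1) * aa d (j-1) else 0)"
proof -
  have "(X * Jminus d) $$ (i,j) = (\<Sum>k<d. X $$ (i,k) * Jminus d $$ (k,j))"
    using assms by (simp add: mult_entry)
  also have "\<dots> = (\<Sum>k<d. X $$ (i,k) * (if j = k + 1 then aa d k else 0))"
    using assms by (intro sum.cong) (auto simp: Jminus_idx)
  also have "\<dots> = (if j \<ge> 1 then X $$ (i,j-1) * aa d (j-1) else 0)"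
  proof (cases "j \<ge> 1")
    case True then show ?thesis using assms by (subst sum_one_nz[of "j-1"]) auto
  next
    case False then show ?thesis by simp
  qed
  finally show ?thesis .
qed

lemma gen_from_v:
  assumes M: "lieC d M" and Jp: "Jplus d \<in> M" and Jm: "Jminus d \<in> M" and V: "dmat d g \<in> M"
    and gd: "\<And>k. k + 1 < d \<Longrightarrow> g (k+1) - g k = 2 * of_nat k + c"
    and k: "k + 1 < d"
  shows "emat d (k+1) k \<in> M" "emat d k (k+1) \<in> M"
proof -
  have P1: "mat d d (\<lambda>(i,j). if g i - g j = 2 * of_nat k + c then Jplus d $$ (i,j) else 0) \<in> M"
    by (rule proj_lemma[OF M V Jp])
  have "(1 / aa d k) \<cdot>\<^sub>m mat d d (\<lambda>(i,j). if g i - g j = 2 * of_nat k + c then Jplus d $$ (i,j) else 0) \<in> M"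
    using P1 M by (rule lieC_smult[rotated])
  then show "emat d (k+1) k \<in> M"
  proof (rule lieC_mat_eq[OF M])
    fix i j assume ij: "i < d" "j < d"
    show "emat d (k + 1) k $$ (i, j) = ((1 / aa d k) \<cdot>\<^sub>m mat d d (\<lambda>(i,j). if g i - g j = 2 * of_nat k + c then Jplus d $$ (i,j) else 0)) $$ (i, j)"
    proof (cases "i = j + 1")
      case True
      then have "g i - g j = 2 * of_nat j + c" using gd ij by simp
      then show ?thesis using True ij aa_nz[OF k] by (auto simp: emat_idx Jplus_idx)
    next
      case False then show ?thesis using ij by (auto simp: emat_idx Jplus_idx)
    qed
  qed simp
  have P2: "mat d d (\<lambda>(i,j). if g i - g j = - (2 * of_nat k + c) then Jminus d $$ (i,j) else 0) \<in> M"
    by (rule proj_lemma[OF M V Jm])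
  have "(1 / aa d k) \<cdot>\<^sub>m mat d d (\<lambda>(i,j). if g i - g j = - (2 * of_nat k + c) then Jminus d $$ (i,j) else 0) \<in> M"
    using P2 M by (rule lieC_smult[rotated])
  then show "emat d k (k+1) \<in> M"
  proof (rule lieC_mat_eq[OF M])
    fix i j assume ij: "i < d" "j < d"
    show "emat d k (k + 1) $$ (i, j) = ((1 / aa d k) \<cdot>\<^sub>m mat d d (\<lambda>(i,j). if g i - g j = - (2 * of_nat k + c) then Jminus d $$ (i,j) else 0)) $$ (i, j)"
    proof (cases "j = i + 1")
      case True
      then have "g i - g j = - (2 * of_nat i + c)" using gd[of i] ij by (simp add: algebra_simps)
      then show ?thesis using True ij aa_nz[OF k] by (auto simp: emat_idx Jminus_idx)
    next
      case False then show ?thesis using ij by (auto simp: emat_idx Jminus_idx)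
    qed
  qed simp
qed


definition cas :: "nat \<Rightarrow> (nat \<Rightarrow> complex) \<Rightarrow> nat \<Rightarrow> complex" where
  "cas N f x = of_nat ((N + 1 - x) * x) * (f x - f (x - 1)) - of_nat ((N - x) * (x + 1)) * (f (x + 1) - f x)"

definition ff :: "nat \<Rightarrow> nat \<Rightarrow> complex" where
  "ff n x = (\<Prod>i<n. of_nat x - of_nat i)"

definition lam :: "nat \<Rightarrow> complex" where "lam k = of_nat (k * (k + 1))"

definition Op :: "nat \<Rightarrow> complex \<Rightarrow> (nat \<Rightarrow> complex) \<Rightarrow> nat \<Rightarrow> complex" where
  "Op N a f x = cas N f x - a * f x"

definition app :: "nat \<Rightarrow> nat list \<Rightarrow> (nat \<Rightarrow> complex) \<Rightarrow> nat \<Rightarrow> complex" where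
  "app N ks f = foldr (\<lambda>k g. Op N (lam k) g) ks f"

lemma app_Nil[simp]: "app N [] f = f" by (simp add: app_def)
lemma app_Cons[simp]: "app N (k # ks) f = Op N (lam k) (app N ks f)" by (simp add: app_def)
lemma app_append: "app N (xs @ ys) f = app N xs (app N ys f)" by (simp add: app_def)

lemma ff_Suc: "ff (Suc m) x = ff m x * (of_nat x - of_nat m)"
  by (simp add: ff_def)

lemma ff_shift: "ff (Suc m) (Suc x) = of_nat (Suc x) * ff m x"
proof -
  have "ff (Suc m) (Suc x) = (of_nat (Suc x) - of_nat 0) * (\<Prod>i<m. of_nat (Suc x) - of_nat (Suc i))"
    unfolding ff_def by (rule prod.lessThan_Suc_shift)
  also have "\<dots> = of_nat (Suc x) * ff m x" by (simp add: ff_def)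
  finally show ?thesis .
qed

lemma ff_zero: "ff (Suc m) 0 = 0"
  unfolding ff_def by (rule prod_zero) auto

lemma ff_fdiff: "ff (Suc m) (Suc x) - ff (Suc m) x = of_nat (Suc m) * ff m x"
  unfolding ff_shift by (simp add: ff_Suc algebra_simps)

lemma ff_bdiff: "of_nat x * (ff n x - ff n (x - 1)) = of_nat n * ff n x"
proof (cases n)
  case 0 then show ?thesis by (simp add: ff_def)
next
  case (Suc m)
  show ?thesis
  proof (cases x)
    case 0 then show ?thesis using Suc by (simp add: ff_zero)
  next
    case (Suc y)
    have "ff n x - ff n (x - 1) = of_nat (Suc m) * ff m y" using \<open>n = Suc m\<close> Suc ff_fdiff by simp
    then show ?thesis using \<open>n = Suc m\<close> Suc by (simp add: ff_shift)
  qed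
qed

lemma cas_ff:
  assumes "x \<le> N"
  shows "cas N (ff (Suc m)) x = lam (Suc m) * ff (Suc m) x
     - of_nat (Suc m) * of_nat (Suc m) * (of_nat N - of_nat m) * ff m x"
proof -
  let ?n = "Suc m"
  have c1: "of_nat ((N + 1 - x) * x) * (ff ?n x - ff ?n (x - 1)) = (of_nat N + 1 - of_nat x) * (of_nat ?n * ff ?n x)"
    using assms ff_bdiff[of x ?n] by (simp add: of_nat_diff mult.assoc)
  have e2: "(of_nat ((N - x) * (x + 1)) :: complex) = (of_nat N - of_nat x) * of_nat (x+1)"
    by (simp only: of_nat_mult of_nat_diff[OF assms])
  have e3: "of_nat (x+1) * (ff ?n (x + 1) - ff ?n x) = of_nat ?n * ff ?n (x+1)"
    using ff_bdiff[of "x+1" ?n] by simp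
  have c2: "of_nat ((N - x) * (x + 1)) * (ff ?n (x + 1) - ff ?n x) = (of_nat N - of_nat x) * (of_nat ?n * ff ?n (x+1))"
    unfolding e2 mult.assoc e3 by (rule refl)
  have c3: "ff ?n (x+1) = ff ?n x + of_nat ?n * ff m x" using ff_fdiff[of m x] by (simp add: algebra_simps)
  have c4: "of_nat x * ff m x = ff ?n x + of_nat m * ff m x" by (simp add: ff_Suc algebra_simps)
  have "cas N (ff ?n) x = of_nat ((N + 1 - x) * x) * (ff ?n x - ff ?n (x - 1)) - of_nat ((N - x) * (x + 1)) * (ff ?n (x + 1) - ff ?n x)"
    by (simp only: cas_def)
  also have "\<dots> = (of_nat N + 1 - of_nat x) * (of_nat ?n * ff ?n x) - (of_nat N - of_nat x) * (of_nat ?n * ff ?n (x+1))"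
    by (simp only: c1 c2)
  also have "\<dots> = (of_nat N + 1 - of_nat x) * (of_nat ?n * ff ?n x) - (of_nat N - of_nat x) * (of_nat ?n * (ff ?n x + of_nat ?n * ff m x))"
    by (simp only: c3)
  also have "\<dots> = of_nat ?n * ff ?n x - of_nat ?n * of_nat ?n * of_nat N * ff m x + of_nat ?n * of_nat ?n * (of_nat x * ff m x)"
    by (simp add: algebra_simps)
  also have "\<dots> = lam (Suc m) * ff (Suc m) x
     - of_nat (Suc m) * of_nat (Suc m) * (of_nat N - of_nat m) * ff m x"
    unfolding c4 lam_def by (simp add: algebra_simps)
  finally show ?thesis .
qed

lemma cas_ff0: "cas N (ff 0) x = 0" by (simp add: cas_def ff_def)


definition geq :: "nat \<Rightarrow> (nat \<Rightarrow> complex) \<Rightarrow> (nat \<Rightarrow> complex) \<Rightarrow> bool" where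
  "geq N f g \<longleftrightarrow> (\<forall>x\<le>N. f x = g x)"

lemma cas_lin: "cas N (\<lambda>x. a * f x + b * g x) x = a * cas N f x + b * cas N g x"
  by (simp add: cas_def algebra_simps)

lemma cas_lin2: "cas N (\<lambda>x. f x - b * g x) x = cas N f x - b * cas N g x"
  by (simp add: cas_def algebra_simps)

lemma cas_zero: "cas N (\<lambda>x. 0) x = 0" by (simp add: cas_def)

lemma cas_geq: assumes "geq N f g" "x \<le> N" shows "cas N f x = cas N g x"
proof (cases "x = N")
  case True then show ?thesis using assms by (simp add: cas_def geq_def)
next
  case False then show ?thesis using assms by (simp add: cas_def geq_def)
qed

lemma Op_lin: "Op N c (\<lambda>x. a * f x + b * g x) = (\<lambda>x. a * Op N c f x + b * Op N c g x)"
  by (rule ext) (simp add: Op_def cas_lin algebra_simps)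

lemma Op_zero: "Op N c (\<lambda>x. 0) = (\<lambda>x. 0)" by (rule ext) (simp add: Op_def cas_zero)

lemma Op_geq: "geq N f g \<Longrightarrow> geq N (Op N c f) (Op N c g)"
  by (simp add: geq_def Op_def cas_geq)

lemma Op_eq: "Op N a f = (\<lambda>x. cas N f x - a * f x)"
  by (rule ext) (simp add: Op_def)

lemma Op_comm: "Op N a (Op N b g) = Op N b (Op N a g)"
proof (rule ext)
  fix x
  have "Op N a (Op N b g) x = cas N (\<lambda>x. cas N g x - b * g x) x - a * (cas N g x - b * g x)"
    by (simp add: Op_eq)
  also have "\<dots> = cas N (cas N g) x - b * cas N g x - a * (cas N g x - b * g x)"
    by (simp add: cas_lin2)
  also have "\<dots> = cas N (cas N g) x - a * cas N g x - b * (cas N g x - a * g x)"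
    by (simp add: algebra_simps)
  also have "\<dots> = Op N b (Op N a g) x"
    by (simp add: Op_eq cas_lin2)
  finally show "Op N a (Op N b g) x = Op N b (Op N a g) x" .
qed

lemma app_lin: "app N ks (\<lambda>x. a * f x + b * g x) = (\<lambda>x. a * app N ks f x + b * app N ks g x)"
  by (induct ks) (simp_all add: Op_lin)

lemma app_zero: "app N ks (\<lambda>x. 0) = (\<lambda>x. 0)"
  by (induct ks) (simp_all add: Op_zero)

lemma app_geq: "geq N f g \<Longrightarrow> geq N (app N ks f) (app N ks g)"
  by (induct ks) (simp_all add: Op_geq)

lemma app_sum: "finite J \<Longrightarrow> app N ks (\<lambda>x. \<Sum>j\<in>J. c j * g j x) = (\<lambda>x. \<Sum>j\<in>J. c j * app N ks (g j) x)"
proof (induct J rule: finite_induct)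
  case empty then show ?case by (simp add: app_zero)
next
  case (insert j J)
  have "app N ks (\<lambda>x. \<Sum>j\<in>insert j J. c j * g j x) = app N ks (\<lambda>x. c j * g j x + 1 * (\<Sum>j\<in>J. c j * g j x))"
    using insert by simp
  also have "\<dots> = (\<lambda>x. c j * app N ks (g j) x + 1 * app N ks (\<lambda>x. \<Sum>j\<in>J. c j * g j x) x)"
    by (rule app_lin)
  finally show ?case using insert by simp
qed

lemma Op_ff: assumes "x \<le> N"
  shows "Op N a (ff (Suc m)) x = (lam (Suc m) - a) * ff (Suc m) x - of_nat (Suc m) * of_nat (Suc m) * (of_nat N - of_nat m) * ff m x"
  unfolding Op_def cas_ff[OF assms] by (simp add: algebra_simps)

lemma Op_ff0: "Op N a (ff 0) x = (lam 0 - a) * ff 0 x"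
  by (simp add: Op_def cas_ff0 lam_def)

lemma kill_ff: "j \<le> n \<Longrightarrow> geq N (app N [0..<Suc n] (ff j)) (\<lambda>x. 0)"
proof (induct n arbitrary: j)
  case 0 then show ?case by (simp add: geq_def Op_ff0 lam_def)
next
  case (Suc n)
  note IH = Suc(1)
  note jle = Suc(2)
  have split: "[0..<Suc (Suc n)] = [0..<Suc n] @ [Suc n]" by simp
  show ?case
  proof (cases j)
    case 0
    have "geq N (Op N (lam (Suc n)) (ff j)) (\<lambda>x. (lam 0 - lam (Suc n)) * ff 0 x + 0 * ff 0 x)"
      using 0 by (simp add: geq_def Op_ff0)
    then have "geq N (app N [0..<Suc n] (Op N (lam (Suc n)) (ff j)))
       (app N [0..<Suc n] (\<lambda>x. (lam 0 - lam (Suc n)) * ff 0 x + 0 * ff 0 x))" by (rule app_geq)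
    then show ?thesis using IH[of 0] unfolding split app_append app_lin
      by (simp add: geq_def)
  next
    case (Suc m)
    have mn: "m \<le> n" using Suc jle by simp
    have "geq N (Op N (lam (Suc n)) (ff j)) (\<lambda>x. (lam (Suc m) - lam (Suc n)) * ff (Suc m) x +
        (- (of_nat (Suc m) * of_nat (Suc m) * (of_nat N - of_nat m))) * ff m x)"
      using Suc by (simp add: geq_def Op_ff)
    then have g: "geq N (app N [0..<Suc n] (Op N (lam (Suc n)) (ff j)))
       (app N [0..<Suc n] (\<lambda>x. (lam (Suc m) - lam (Suc n)) * ff (Suc m) x +
        (- (of_nat (Suc m) * of_nat (Suc m) * (of_nat N - of_nat m))) * ff m x))" by (rule app_geq)
    show ?thesis
    proof (cases "Suc m = Suc n")
      case True
      then show ?thesis using g IH[OF mn] unfolding split app_append app_lin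
        by (simp add: geq_def \<open>j = Suc m\<close>)
    next
      case False
      then have "Suc m \<le> n" using jle Suc by simp
      then show ?thesis using g IH[OF mn] IH[of "Suc m"] unfolding split app_append app_lin
        by (simp add: geq_def \<open>j = Suc m\<close>)
    qed
  qed
qed

lemma ff_vanish: "x < n \<Longrightarrow> ff n x = 0"
  unfolding ff_def by (rule prod_zero) auto

lemma ff_diag_nz: "ff n n \<noteq> 0"
  unfolding ff_def by (auto simp: prod_zero_iff)

lemma newton: "\<exists>c. \<forall>x\<le>K. f x = (\<Sum>j\<le>K. c j * ff j x)"
proof (induct K)
  case 0 then show ?case by (intro exI[of _ "\<lambda>_. f 0"]) (simp add: ff_def)
next
  case (Suc K)
  then obtain c where c: "\<forall>x\<le>K. f x = (\<Sum>j\<le>K. c j * ff j x)" by blast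
  define s where "s = (\<Sum>j\<le>K. c j * ff j (Suc K))"
  define c' where "c' = c(Suc K := (f (Suc K) - s) / ff (Suc K) (Suc K))"
  have "\<forall>x\<le>Suc K. f x = (\<Sum>j\<le>Suc K. c' j * ff j x)"
  proof (intro allI impI)
    fix x assume x: "x \<le> Suc K"
    have e: "(\<Sum>j\<le>Suc K. c' j * ff j x) = (\<Sum>j\<le>K. c j * ff j x) + c' (Suc K) * ff (Suc K) x"
      by (simp add: c'_def)
    show "f x = (\<Sum>j\<le>Suc K. c' j * ff j x)"
    proof (cases "x = Suc K")
      case True then show ?thesis unfolding e using ff_diag_nz[of "Suc K"] by (simp add: c'_def s_def)
    next
      case False then have "x \<le> K" using x by simp
      then show ?thesis unfolding e using c ff_vanish[of x "Suc K"] by simp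
    qed
  qed
  then show ?case by blast
qed

lemma kill_all: "geq N (app N [0..<Suc N] f) (\<lambda>x. 0)"
proof -
  define ks where "ks = [0..<Suc N]"
  obtain c where c: "\<forall>x\<le>N. f x = (\<Sum>j\<le>N. c j * ff j x)" using newton by blast
  then have "geq N f (\<lambda>x. \<Sum>j\<le>N. c j * ff j x)" by (simp add: geq_def)
  then have g1: "geq N (app N ks f) (app N ks (\<lambda>x. \<Sum>j\<le>N. c j * ff j x))" by (rule app_geq)
  have g2: "app N ks (\<lambda>x. \<Sum>j\<le>N. c j * ff j x) = (\<lambda>x. \<Sum>j\<le>N. c j * app N ks (ff j) x)"
    by (rule app_sum) simp
  have "\<And>j x. j \<le> N \<Longrightarrow> x \<le> N \<Longrightarrow> app N ks (ff j) x = 0"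
    using kill_ff unfolding ks_def geq_def by blast
  then have "\<And>x. x \<le> N \<Longrightarrow> (\<Sum>j\<le>N. c j * app N ks (ff j) x) = 0" by simp
  then show ?thesis using g1 unfolding g2 ks_def[symmetric] geq_def by simp
qed


definition vv :: "nat \<Rightarrow> nat \<Rightarrow> complex" where
  "vv N x = 6 * (of_nat x)^2 - 6 * of_nat N * of_nat x + of_nat N * (of_nat N - 1)"

lemma ff0: "ff 0 x = 1" by (simp add: ff_def)
lemma ff1: "ff 1 x = of_nat x" by (simp add: ff_def)
lemma ff1': "ff (Suc 0) x = of_nat x" by (simp add: ff_def)
lemma ff2: "ff 2 x = of_nat x * (of_nat x - 1)" by (simp add: ff_def eval_nat_numeral)

lemma vv_ff: "vv N = (\<lambda>x. 6 * ff 2 x + 1 * (\<lambda>x. (6 - 6 * of_nat N) * ff 1 x + (of_nat N * (of_nat N - 1)) * ff 0 x) x)"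
  by (rule ext) (simp add: vv_def ff0 ff1 ff1' ff2 algebra_simps power2_eq_square)

lemma cas_vv: assumes "x \<le> N" shows "cas N (vv N) x = 6 * vv N x"
proof -
  have c2: "cas N (ff 2) x = lam 2 * ff 2 x - 4 * (of_nat N - 1) * ff 1 x"
    using cas_ff[OF assms, of 1] by (simp add: numeral_2_eq_2)
  have c1: "cas N (ff 1) x = lam 1 * ff 1 x - of_nat N * ff 0 x"
    using cas_ff[OF assms, of 0] by simp
  have "cas N (vv N) x = 6 * cas N (ff 2) x + ((6 - 6 * of_nat N) * cas N (ff 1) x + (of_nat N * (of_nat N - 1)) * cas N (ff 0) x)"
    unfolding vv_ff cas_lin by simp
  also have "\<dots> = 6 * vv N x"
    unfolding c1 c2 cas_ff0 by (simp add: vv_def ff0 ff1 ff1' ff2 lam_def algebra_simps power2_eq_square)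
  finally show ?thesis .
qed

lemma eig_zero:
  assumes N: "N \<ge> 2" and E: "\<And>x. x \<le> N \<Longrightarrow> cas N u x = 6 * u x" and u0: "u 0 = 0"
  shows "x \<le> N \<Longrightarrow> u x = 0"
proof -
  have P: "\<And>x. x + 1 \<le> N \<Longrightarrow> u x = 0 \<and> u (x + 1) = 0"
  proof -
    fix x show "x + 1 \<le> N \<Longrightarrow> u x = 0 \<and> u (x + 1) = 0"
    proof (induct x)
      case 0
      have c: "cas N u 0 = 6 * u 0" by (rule E) simp
      have "cas N u 0 = - (of_nat N * (u 1 - u 0))" unfolding cas_def by simp
      then have "of_nat N * u 1 = 0" using u0 c by simp
      then show ?case using u0 N by simp
    next
      case (Suc x)
      then have h: "u x = 0" "u (x+1) = 0" by auto
      have c: "cas N u (x+1) = 6 * u (x+1)" by (rule E) (use Suc(2) in simp)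
      have "cas N u (x+1) = of_nat ((N + 1 - (x+1)) * (x+1)) * (u (x+1) - u x) - of_nat ((N - (x+1)) * (x + 2)) * (u (x+2) - u (x+1))"
        unfolding cas_def by (simp add: numeral_2_eq_2)
      then have "of_nat ((N - (x + 1)) * (x + 2)) * u (x + 2) = 0"
        using h c by simp
      moreover have "(N - (x + 1)) * (x + 2) \<noteq> 0" using Suc(2) by simp
      ultimately have "u (x+2) = 0" by (metis mult_eq_0_iff of_nat_eq_0_iff)
      then show ?case using h by simp
    qed
  qed
  assume x: "x \<le> N"
  show "u x = 0"
  proof (cases x)
    case 0 then show ?thesis using u0 by simp
  next
    case (Suc y) then show ?thesis using P[of y] x by simp
  qed
qed

lemma eig_unique:
  assumes N: "N \<ge> 2" and E: "\<And>x. x \<le> N \<Longrightarrow> cas N g x = 6 * g x"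
  shows "x \<le> N \<Longrightarrow> g x = (g 0 / vv N 0) * vv N x"
proof -
  define c where "c = g 0 / vv N 0"
  have "vv N 0 = of_nat (N * (N - 1))" using N by (simp add: vv_def of_nat_diff)
  moreover have "N * (N - 1) \<noteq> 0" using N by simp
  ultimately have v0: "vv N 0 \<noteq> 0" by simp
  define u where "u = (\<lambda>x. g x - c * vv N x)"
  have Eu: "\<And>x. x \<le> N \<Longrightarrow> cas N u x = 6 * u x"
  proof -
    fix x assume x: "x \<le> N"
    have "cas N u x = cas N g x - c * cas N (vv N) x" unfolding u_def by (rule cas_lin2)
    also have "\<dots> = 6 * g x - c * (6 * vv N x)" by (simp only: E[OF x] cas_vv[OF x])
    also have "\<dots> = 6 * u x" unfolding u_def by (simp only: right_diff_distrib mult.left_commute)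
    finally show "cas N u x = 6 * u x" .
  qed
  have u0: "u 0 = 0" unfolding u_def c_def using v0 by simp
  assume x: "x \<le> N"
  have "u x = 0" by (rule eig_zero[OF N Eu u0 x])
  then show "g x = (g 0 / vv N 0) * vv N x" unfolding u_def c_def by simp
qed

definition beta :: "nat \<Rightarrow> (nat \<Rightarrow> complex) \<Rightarrow> (nat \<Rightarrow> complex) \<Rightarrow> complex" where
  "beta N f g = (\<Sum>x\<le>N. f x * g x)"

lemma beta_cas_D:
  assumes "N = Suc M"
  shows "beta N (cas N f) g = (\<Sum>x\<le>M. of_nat ((N - x) * (x + 1)) * (f (x+1) - f x) * (g (x+1) - g x))"
proof -
  define e where "e = (\<lambda>x. of_nat ((N - x) * (x + 1)) * (f (x+1) - f x))"
  have cs: "\<And>x. cas N f x = (if x = 0 then 0 else e (x - 1)) - e x"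
  proof -
    fix x show "cas N f x = (if x = 0 then 0 else e (x - 1)) - e x"
      by (cases x) (simp_all add: cas_def e_def algebra_simps)
  qed
  have "beta N (cas N f) g = (\<Sum>x\<le>N. (if x = 0 then 0 else e (x - 1)) * g x - e x * g x)"
    unfolding beta_def by (rule sum.cong) (simp_all add: cs algebra_simps)
  also have "\<dots> = (\<Sum>x\<le>N. (if x = 0 then 0 else e (x - 1)) * g x) - (\<Sum>x\<le>N. e x * g x)"
    by (rule sum_subtractf)
  also have "(\<Sum>x\<le>N. (if x = 0 then 0 else e (x - 1)) * g x) = (\<Sum>x\<le>M. e x * g (Suc x))"
    unfolding assms by (subst sum.atMost_Suc_shift) simp
  also have "(\<Sum>x\<le>N. e x * g x) = (\<Sum>x\<le>M. e x * g x)"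
    unfolding assms using assms by (simp add: e_def)
  also have "(\<Sum>x\<le>M. e x * g (Suc x)) - (\<Sum>x\<le>M. e x * g x) = (\<Sum>x\<le>M. e x * (g (Suc x) - g x))"
    by (simp add: sum_subtractf right_diff_distrib)
  also have "\<dots> = (\<Sum>x\<le>M. of_nat ((N - x) * (x + 1)) * (f (x+1) - f x) * (g (x+1) - g x))"
    unfolding e_def by simp
  finally show ?thesis .
qed

lemma beta_cas_sym: assumes "N \<ge> 1" shows "beta N (cas N f) g = beta N f (cas N g)"
proof -
  obtain M where M: "N = Suc M" using assms by (cases N) auto
  have "beta N (cas N f) g = beta N (cas N g) f"
    unfolding beta_cas_D[OF M] by (simp add: algebra_simps)
  then show ?thesis by (simp add: beta_def mult.commute)
qed

lemma beta_Op_sym: "N \<ge> 1 \<Longrightarrow> beta N (Op N a f) g = beta N f (Op N a g)"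
  using beta_cas_sym[of N f g] by (simp add: beta_def Op_def algebra_simps sum_subtractf sum_distrib_left)

lemma beta_geq2: "geq N g h \<Longrightarrow> beta N f g = beta N f h"
  by (simp add: beta_def geq_def)
lemma beta_geq1: "geq N f h \<Longrightarrow> beta N f g = beta N h g"
  by (simp add: beta_def geq_def)

lemma beta_app_vv:
  assumes "N \<ge> 1"
  shows "beta N (app N ks f) (vv N) = (\<Prod>k\<leftarrow>ks. 6 - lam k) * beta N f (vv N)"
proof (induct ks)
  case Nil then show ?case by simp
next
  case (Cons k ks)
  have "geq N (Op N (lam k) (vv N)) (\<lambda>x. (6 - lam k) * vv N x)"
    by (simp add: geq_def Op_def cas_vv algebra_simps)
  then have "beta N (Op N (lam k) (app N ks f)) (vv N) = beta N (app N ks f) (\<lambda>x. (6 - lam k) * vv N x)"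
    using beta_Op_sym[OF assms] beta_geq2 by metis
  also have "\<dots> = (6 - lam k) * beta N (app N ks f) (vv N)"
    by (simp add: beta_def sum_distrib_left algebra_simps)
  finally show ?case using Cons by simp
qed

definition Ps :: "nat \<Rightarrow> nat list" where "Ps N = [0, 1] @ [3..<Suc N]"

lemma lam_ne6: assumes k: "k \<noteq> 2" shows "lam k \<noteq> 6"
proof
  assume l: "lam k = 6"
  have "(of_nat (k * (k + 1)) :: complex) = of_nat 6" using l unfolding lam_def by simp
  then have e: "k * (k + 1) = 6" by (simp only: of_nat_eq_iff)
  have "k < 3"
  proof (rule ccontr)
    assume "\<not> k < 3"
    then have "3 * 4 \<le> k * (k + 1)" by (intro mult_mono) auto
    then show False using e by simp
  qed
  then have "k = 0 \<or> k = 1 \<or> k = 2" by auto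
  then show False using e k by auto
qed

lemma grid_main:
  assumes N: "N \<ge> 2" and B: "beta N f (vv N) \<noteq> 0"
  shows "\<exists>c. c \<noteq> 0 \<and> (\<forall>x\<le>N. app N (Ps N) f x = c * vv N x)"
proof -
  define w where "w = app N (Ps N) f"
  have up: "[0..<Suc N] = [0, 1, 2] @ [3..<Suc N]"
  proof -
    have "[0..<3 + (Suc N - 3)] = [0..<3] @ [3..<3 + (Suc N - 3)]" by (rule upt_add_eq_append) simp
    moreover have "3 + (Suc N - 3) = Suc N" using N by simp
    moreover have "[0..<3] = [0, 1, 2]" by (simp add: numeral_3_eq_3)
    ultimately show ?thesis by simp
  qed
  have "Op N (lam 2) w = Op N (lam 2) (Op N (lam 0) (Op N (lam 1) (app N [3..<Suc N] f)))"
    unfolding w_def Ps_def by simp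
  also have "\<dots> = Op N (lam 0) (Op N (lam 1) (Op N (lam 2) (app N [3..<Suc N] f)))"
    by (simp only: Op_comm[of N "lam 2" "lam 0"] Op_comm[of N "lam 2" "lam 1"])
  also have "\<dots> = app N [0..<Suc N] f" unfolding up by simp
  finally have "Op N (lam 2) w = app N [0..<Suc N] f" .
  then have "geq N (Op N (lam 2) w) (\<lambda>x. 0)" using kill_all by simp
  then have E: "\<And>x. x \<le> N \<Longrightarrow> cas N w x = 6 * w x"
    by (simp add: geq_def Op_def lam_def)
  define c where "c = w 0 / vv N 0"
  have wc: "\<And>x. x \<le> N \<Longrightarrow> w x = c * vv N x" using eig_unique[OF N E] c_def by blast
  have "beta N w (vv N) = (\<Prod>k\<leftarrow>Ps N. 6 - lam k) * beta N f (vv N)"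
    unfolding w_def using N by (intro beta_app_vv) simp
  moreover have "(\<Prod>k\<leftarrow>Ps N. 6 - lam k) \<noteq> 0"
    by (auto simp: prod_list_zero_iff Ps_def lam_ne6)
  ultimately have bw: "beta N w (vv N) \<noteq> 0" using B by simp
  have "c \<noteq> 0"
  proof
    assume "c = 0"
    then have "beta N w (vv N) = 0" using wc by (simp add: beta_def)
    then show False using bw by simp
  qed
  then show ?thesis using wc w_def by blast
qed


lemma dmat_mult: assumes "X \<in> carrier_mat d d" "i < d" "j < d"
  shows "(dmat d f * X) $$ (i,j) = f i * X $$ (i,j)"
proof -
  have "(dmat d f * X) $$ (i,j) = (\<Sum>k<d. dmat d f $$ (i,k) * X $$ (k,j))"
    by (rule mult_entry[OF dmat_carrier assms])
  also have "\<dots> = (\<Sum>k<d. (if i = k then f i else 0) * X $$ (k,j))"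
    using assms by (intro sum.cong) (auto simp: dmat_def)
  also have "\<dots> = f i * X $$ (i,j)" using assms by (subst sum_one_nz[of i]) auto
  finally show ?thesis .
qed

lemma mult_dmat: assumes "X \<in> carrier_mat d d" "i < d" "j < d"
  shows "(X * dmat d f) $$ (i,j) = X $$ (i,j) * f j"
proof -
  have "(X * dmat d f) $$ (i,j) = (\<Sum>k<d. X $$ (i,k) * dmat d f $$ (k,j))"
    by (rule mult_entry[OF assms(1) dmat_carrier assms(2,3)])
  also have "\<dots> = (\<Sum>k<d. X $$ (i,k) * (if k = j then f k else 0))"
    using assms by (intro sum.cong) (auto simp: dmat_def)
  also have "\<dots> = X $$ (i,j) * f j" using assms by (subst sum_one_nz[of j]) auto
  finally show ?thesis .
qed

lemma dmat_idx: "i < d \<Longrightarrow> j < d \<Longrightarrow> dmat d f $$ (i,j) = (if i = j then f i else 0)"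
  by (simp add: dmat_def)

lemma aa_sq': assumes "k < d" shows "aa d k * aa d k = (of_nat d - 1 - of_nat k) * (of_nat k + 1)"
proof -
  have "aa d k * aa d k = of_nat (d - 1 - k) * of_nat (k + 1)" using aa_sq[OF assms] by (simp only: of_nat_mult)
  also have "(of_nat (d - 1 - k) :: complex) = of_nat d - 1 - of_nat k" using assms by (simp add: of_nat_diff)
  finally show ?thesis by simp
qed

lemma Jz_eq: "Jplus d * Jminus d - Jminus d * Jplus d = dmat d (\<lambda>i. 2 * of_nat i - of_nat (d - 1))"
proof (rule eq_matI)
  fix i j assume "i < dim_row (dmat d (\<lambda>i. 2 * of_nat i - of_nat (d - 1)))" "j < dim_col (dmat d (\<lambda>i. 2 * of_nat i - of_nat (d - 1)))"
  then have ij: "i < d" "j < d" by auto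
  have e: "(Jplus d * Jminus d - Jminus d * Jplus d) $$ (i,j) = (Jplus d * Jminus d) $$ (i,j) - (Jminus d * Jplus d) $$ (i,j)"
    using ij by (simp add: comm_entry)
  show "(Jplus d * Jminus d - Jminus d * Jplus d) $$ (i,j) = dmat d (\<lambda>i. 2 * of_nat i - of_nat (d - 1)) $$ (i,j)"
  proof (cases "i = j")
    case True
    have p1: "(Jplus d * Jminus d) $$ (i,i) = (if i \<ge> 1 then aa d (i-1) * aa d (i-1) else 0)"
      using ij by (simp add: Jp_mult Jminus_idx)
    have p2: "(Jminus d * Jplus d) $$ (i,i) = (if i + 1 < d then aa d i * aa d i else 0)"
      using ij by (simp add: Jm_mult Jplus_idx)
    have t: "dmat d (\<lambda>i. 2 * of_nat i - of_nat (d - 1)) $$ (i,j) = 2 * of_nat i - (of_nat d - 1)"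
      using ij True by (simp add: dmat_idx of_nat_diff)
    have a2: "aa d i * aa d i = (of_nat d - 1 - of_nat i) * (of_nat i + 1)" by (rule aa_sq'[OF ij(1)])
    show ?thesis
    proof (cases "i = 0")
      case True
      show ?thesis
      proof (cases "1 < d")
        case True then show ?thesis using e p1 p2 t a2 \<open>i = 0\<close> \<open>i = j\<close> by simp
      next
        case False then have "d = 1" using ij by simp
        then show ?thesis using e p1 p2 t \<open>i = 0\<close> \<open>i = j\<close> by simp
      qed
    next
      case False
      then have i1: "i \<ge> 1" by simp
      have a1: "aa d (i-1) * aa d (i-1) = (of_nat d - 1 - of_nat (i - 1)) * (of_nat (i - 1) + 1)"
        by (rule aa_sq') (use ij in simp)
      have im: "(of_nat (i - 1) :: complex) = of_nat i - 1" using i1 by (simp add: of_nat_diff)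
      show ?thesis
      proof (cases "i + 1 < d")
        case True
        have "(Jplus d * Jminus d - Jminus d * Jplus d) $$ (i,j) = aa d (i-1) * aa d (i-1) - aa d i * aa d i"
          using e p1 p2 i1 True \<open>i = j\<close> by simp
        also have "\<dots> = (of_nat d - 1 - (of_nat i - 1)) * (of_nat i - 1 + 1) - (of_nat d - 1 - of_nat i) * (of_nat i + 1)"
          by (simp only: a1 a2 im)
        also have "\<dots> = 2 * of_nat i - (of_nat d - 1)" by (simp add: algebra_simps)
        finally show ?thesis using t by simp
      next
        case False
        then have "d = i + 1" using ij by simp
        then have "of_nat i = (of_nat d - 1 :: complex)" by simp
        then have di: "(of_nat d :: complex) = of_nat i + 1" by simp
        have "(Jplus d * Jminus d - Jminus d * Jplus d) $$ (i,j) = aa d (i-1) * aa d (i-1)"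
          using e p1 p2 i1 False \<open>i = j\<close> by simp
        also have "\<dots> = (of_nat d - 1 - (of_nat i - 1)) * (of_nat i - 1 + 1)"
          by (simp only: a1 im)
        also have "\<dots> = 2 * of_nat i - (of_nat d - 1)" unfolding di by (simp add: algebra_simps)
        finally show ?thesis using t by simp
      qed
    qed
  next
    case False
    then show ?thesis using e ij by (auto simp: Jp_mult Jm_mult Jminus_idx Jplus_idx dmat_idx)
  qed
qed auto

lemma Jz_in:
  assumes M: "lieC d M" and "Jplus d \<in> M" "Jminus d \<in> M"
  shows "dmat d (\<lambda>i. 2 * of_nat i - of_nat (d - 1)) \<in> M"
  using lieC_comm[OF M assms(2,3)] Jz_eq by simp

lemma band_in:
  assumes M: "lieC d M" and "Jplus d \<in> M" "Jminus d \<in> M" "X \<in> M"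
  shows "mat d d (\<lambda>(i,j). if int i - int j = p then X $$ (i,j) else 0) \<in> M"
proof -
  have "mat d d (\<lambda>(i,j). if (2 * of_nat i - of_nat (d - 1)) - (2 * of_nat j - of_nat (d - 1)) = (2 * of_int p :: complex)
      then X $$ (i,j) else 0) \<in> M"
    by (rule proj_lemma[OF M Jz_in[OF assms(1-3)] assms(4)])
  moreover have "\<And>i j. ((2 * of_nat i - of_nat (d - 1)) - (2 * of_nat j - of_nat (d - 1)) = (2 * of_int p :: complex))
      = (int i - int j = p)"
  proof -
    fix i j
    have "((2 * of_nat i - of_nat (d - 1)) - (2 * of_nat j - of_nat (d - 1)) = (2 * of_int p :: complex))
        = (of_int (2 * (int i - int j)) = (of_int (2 * p) :: complex))" by simp
    also have "\<dots> = (int i - int j = p)" by (simp only: of_int_eq_iff) presburger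
    finally show "((2 * of_nat i - of_nat (d - 1)) - (2 * of_nat j - of_nat (d - 1)) = (2 * of_int p :: complex))
      = (int i - int j = p)" .
  qed
  ultimately show ?thesis by simp
qed

lemma diag_in:
  assumes M: "lieC d M" and "Jplus d \<in> M" "Jminus d \<in> M" "X \<in> M"
  shows "dmat d (\<lambda>i. X $$ (i,i)) \<in> M"
proof -
  have "mat d d (\<lambda>(i,j). if int i - int j = 0 then X $$ (i,j) else 0) \<in> M"
    by (rule band_in[OF assms])
  moreover have "mat d d (\<lambda>(i,j). if int i - int j = 0 then X $$ (i,j) else 0) = dmat d (\<lambda>i. X $$ (i,i))"
    by (intro eq_matI) (auto simp: dmat_def)
  ultimately show ?thesis by simp
qed

lemma cas_mat:
  assumes "i < d"
  shows "((Jplus d * (Jminus d * dmat d f - dmat d f * Jminus d)) - (Jminus d * dmat d f - dmat d f * Jminus d) * Jplus d) $$ (i,i)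
     = cas (d - 1) f i"
proof -
  let ?Z = "Jminus d * dmat d f - dmat d f * Jminus d"
  have Zc: "?Z \<in> carrier_mat d d" by (meson Jminus_carrier dmat_carrier minus_carrier_mat mult_carrier_mat)
  have Z: "\<And>a b. a < d \<Longrightarrow> b < d \<Longrightarrow> ?Z $$ (a,b) = (if a + 1 < d then aa d a * (if a + 1 = b then f b else 0) else 0)
        - f a * (if b \<ge> 1 then (if a = b - 1 then aa d (b - 1) else 0) else 0)"
    by (simp add: comm_entry Jm_mult mult_Jm dmat_mult dmat_idx dmat_carrier)
  have e: "(Jplus d * ?Z - ?Z * Jplus d) $$ (i,i) = (Jplus d * ?Z) $$ (i,i) - (?Z * Jplus d) $$ (i,i)"
    using assms by (simp add: comm_entry)
  have 1: "(Jplus d * ?Z) $$ (i,i) = (if i \<ge> 1 then aa d (i-1) * aa d (i-1) * (f i - f (i - 1)) else 0)"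
    using assms by (simp add: Jp_mult[OF Zc] Z Jm_mult mult_Jm dmat_mult dmat_idx Jminus_idx algebra_simps)
  have 2: "(?Z * Jplus d) $$ (i,i) = (if i + 1 < d then aa d i * aa d i * (f (i+1) - f i) else 0)"
    using assms by (simp add: mult_Jp[OF Zc] Z Jm_mult mult_Jm dmat_mult dmat_idx Jminus_idx algebra_simps)
  show ?thesis
  proof (cases "i = 0")
    case True
    then show ?thesis using e 1 2 assms aa_sq[of 0 d]
      by (cases "1 < d") (auto simp: cas_def algebra_simps)
  next
    case False
    have a1: "aa d (i - 1) * aa d (i - 1) = of_nat ((d - 1 + 1 - i) * i)"
      using aa_sq[of "i-1" d] assms False by simp
    show ?thesis
    proof (cases "i + 1 < d")
      case True
      have a2: "aa d i * aa d i = of_nat ((d - 1 - i) * (i + 1))" using aa_sq[of i d] assms by simp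
      show ?thesis using e 1 2 a1 a2 True False by (simp add: cas_def)
    next
      case F2: False
      then have "d - 1 - i = 0" by simp
      then show ?thesis using e 1 2 a1 F2 False by (simp add: cas_def)
    qed
  qed
qed

lemma cas_in:
  assumes M: "lieC d M" and Jp: "Jplus d \<in> M" and Jm: "Jminus d \<in> M" and D: "dmat d f \<in> M"
  shows "dmat d (cas (d - 1) f) \<in> M"
proof -
  let ?Y = "(Jplus d * (Jminus d * dmat d f - dmat d f * Jminus d)) - (Jminus d * dmat d f - dmat d f * Jminus d) * Jplus d"
  have "?Y \<in> M" using M Jp Jm D by (intro lieC_comm) (auto intro: lieC_comm)
  then have "dmat d (\<lambda>i. ?Y $$ (i,i)) \<in> M" by (rule diag_in[OF M Jp Jm])
  moreover have "dmat d (\<lambda>i. ?Y $$ (i,i)) = dmat d (cas (d - 1) f)"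
  proof (rule eq_matI)
    fix i j assume "i < dim_row (dmat d (cas (d - 1) f))" "j < dim_col (dmat d (cas (d - 1) f))"
    then have ij: "i < d" "j < d" by auto
    show "dmat d (\<lambda>i. ?Y $$ (i,i)) $$ (i,j) = dmat d (cas (d - 1) f) $$ (i,j)"
      using ij by (simp only: dmat_idx cas_mat)
  qed auto
  ultimately show ?thesis by simp
qed

lemma Op_in:
  assumes M: "lieC d M" and Jp: "Jplus d \<in> M" and Jm: "Jminus d \<in> M" and D: "dmat d f \<in> M"
  shows "dmat d (Op (d - 1) a f) \<in> M"
proof -
  have "dmat d (cas (d - 1) f) + (- a) \<cdot>\<^sub>m dmat d f \<in> M"
    using cas_in[OF assms] D M by (intro lieC_add[OF M] lieC_smult[OF M])
  moreover have "dmat d (cas (d - 1) f) + (- a) \<cdot>\<^sub>m dmat d f = dmat d (Op (d - 1) a f)"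
    by (intro eq_matI) (auto simp: dmat_def Op_def)
  ultimately show ?thesis by simp
qed

lemma app_in:
  assumes M: "lieC d M" and Jp: "Jplus d \<in> M" and Jm: "Jminus d \<in> M" and D: "dmat d f \<in> M"
  shows "dmat d (app (d - 1) ks f) \<in> M"
proof (induct ks)
  case Nil show ?case using D by simp
next
  case (Cons a ks)
  have "dmat d (Op (d - 1) (lam a) (app (d - 1) ks f)) \<in> M" by (rule Op_in[OF M Jp Jm Cons])
  then show ?case by (simp only: app_Cons)
qed

lemma sl_from_diag:
  assumes M: "lieC d M" and Jp: "Jplus d \<in> M" and Jm: "Jminus d \<in> M" and D: "dmat d f \<in> M"
    and d3: "d \<ge> 3" and B: "beta (d - 1) f (vv (d - 1)) \<noteq> 0"
    and A: "A \<in> carrier_mat d d" "trace A = 0"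
  shows "A \<in> M"
proof -
  let ?N = "d - 1"
  have N2: "2 \<le> ?N" using d3 by simp
  obtain c where c: "c \<noteq> 0" "\<forall>x\<le>?N. app ?N (Ps ?N) f x = c * vv ?N x"
    using grid_main[OF N2 B] by blast
  have "(1 / (6 * c)) \<cdot>\<^sub>m dmat d (app ?N (Ps ?N) f) \<in> M"
    using app_in[OF M Jp Jm D] by (rule lieC_smult[OF M])
  moreover have "(1 / (6 * c)) \<cdot>\<^sub>m dmat d (app ?N (Ps ?N) f) = dmat d (\<lambda>x. vv ?N x / 6)"
    using c by (intro eq_matI) (auto simp: dmat_def)
  ultimately have V: "dmat d (\<lambda>x. vv ?N x / 6) \<in> M" by simp
  have gd: "\<And>k. k + 1 < d \<Longrightarrow> vv ?N (k+1) / 6 - vv ?N k / 6 = 2 * of_nat k + (1 - of_nat ?N)"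
    by (simp add: vv_def field_simps power2_eq_square)
  have E1: "\<And>k. k + 1 < d \<Longrightarrow> emat d (k+1) k \<in> M" using gen_from_v(1)[OF M Jp Jm V gd] by blast
  have E2: "\<And>k. k + 1 < d \<Longrightarrow> emat d k (k+1) \<in> M" using gen_from_v(2)[OF M Jp Jm V gd] by blast
  have d0: "0 < d" using d3 by simp
  show ?thesis by (rule sl_gen[OF M E1 E2 A d0])
qed


lemma rfact_nat[simp]: "rfact (real n) = fact n" by (simp add: rfact_def)
lemma rfact_int: "rfact (real_of_int k) = fact (nat k)" by (simp add: rfact_def)

definition A0 :: "nat \<Rightarrow> real" where
  "A0 N = sqrt ((real N + 1) * 2 * fact (N - 2) * 2 / fact (N + 3))"

lemma A0_pos: "A0 N > 0" unfolding A0_def by simp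

lemma cg_general:
  fixes N x y :: nat and q :: int
  assumes N: "N \<ge> 2" and x: "x \<le> N" and y: "y \<le> N" and yq: "int y = int x + q" and q: "-2 \<le> q" "q \<le> 2"
  shows "clebsch_gordan 2 (of_int q) (real N / 2) (real x - real N / 2) (real N / 2) (real y - real N / 2) =
    A0 N * sqrt (fact y * fact (N - y) * fact (nat (2 - q)) * fact (nat (2 + q)) * fact (N - x) * fact x) *
    (\<Sum>t \<in> {t \<in> {0..2}. int t \<le> 2 - q \<and> t \<le> x \<and> 0 \<le> q + int t \<and> x + 2 \<le> N + t}.
       (-1) ^ t / (fact t * fact (2 - t) * fact (nat (2 - q - int t)) * fact (x - t) * fact (nat (q + int t)) * fact (N + t - x - 2)))"
proof -
  let ?J = "real N / 2"
  have ry: "real y = real x + real_of_int q" using yq by (metis of_int_add of_int_of_nat_eq)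
  have cond: "(real y - ?J = real_of_int q + (real x - ?J) \<and> \<bar>real_of_int q\<bar> \<le> 2 \<and> \<bar>real x - ?J\<bar> \<le> ?J \<and> \<bar>real y - ?J\<bar> \<le> ?J
        \<and> \<bar>2 - ?J\<bar> \<le> ?J \<and> ?J \<le> 2 + ?J \<and> 2 + ?J + ?J \<in> \<int>
        \<and> 2 - real_of_int q \<in> \<int> \<and> 2 + real_of_int q \<in> \<int> \<and> ?J - (real x - ?J) \<in> \<int> \<and> ?J + (real x - ?J) \<in> \<int>
        \<and> ?J - (real y - ?J) \<in> \<int> \<and> ?J + (real y - ?J) \<in> \<int>)"
  proof (intro conjI)
    show "real y - ?J = real_of_int q + (real x - ?J)" using ry by simp
    show "\<bar>real_of_int q\<bar> \<le> 2" using q by auto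
    have rx: "real x \<le> real N" using x by simp
    show "\<bar>real x - ?J\<bar> \<le> ?J" unfolding abs_le_iff using rx by linarith
    have ry': "real y \<le> real N" using y by simp
    show "\<bar>real y - ?J\<bar> \<le> ?J" unfolding abs_le_iff using ry' by linarith
    have rN: "2 \<le> real N" using N by simp
    show "\<bar>2 - ?J\<bar> \<le> ?J" unfolding abs_le_iff using rN by linarith
    show "?J \<le> 2 + ?J" by simp
    have "2 + ?J + ?J = of_int (2 + int N)" by simp
    then show "2 + ?J + ?J \<in> \<int>" by (metis Ints_of_int)
    have "2 - real_of_int q = of_int (2 - q)" by simp
    then show "2 - real_of_int q \<in> \<int>" by (metis Ints_of_int)
    have "2 + real_of_int q = of_int (2 + q)" by simp
    then show "2 + real_of_int q \<in> \<int>" by (metis Ints_of_int)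
    have "?J - (real x - ?J) = of_int (int N - int x)" by simp
    then show "?J - (real x - ?J) \<in> \<int>" by (metis Ints_of_int)
    have "?J + (real x - ?J) = of_int (int x)" by simp
    then show "?J + (real x - ?J) \<in> \<int>" by (metis Ints_of_int)
    have "?J - (real y - ?J) = of_int (int N - int y)" by simp
    then show "?J - (real y - ?J) \<in> \<int>" by (metis Ints_of_int)
    have "?J + (real y - ?J) = of_int (int y)" by simp
    then show "?J + (real y - ?J) \<in> \<int>" by (metis Ints_of_int)
  qed
  have e1: "sqrt ((2 * ?J + 1) * rfact (?J + 2 - ?J) * rfact (?J - 2 + ?J) * rfact (2 + ?J - ?J) / rfact (2 + ?J + ?J + 1)) = A0 N"
  proof -
    have "?J + 2 - ?J = real 2" "2 + ?J - ?J = real 2" "2 + ?J + ?J + 1 = real (N + 3)" "2 * ?J + 1 = real N + 1"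
      by simp_all
    moreover have "?J - 2 + ?J = real (N - 2)" using N by (simp add: of_nat_diff)
    ultimately show ?thesis unfolding A0_def by (simp only: rfact_nat) simp
  qed
  have e2: "sqrt (rfact (?J + (real y - ?J)) * rfact (?J - (real y - ?J)) * rfact (2 - real_of_int q) * rfact (2 + real_of_int q)
            * rfact (?J - (real x - ?J)) * rfact (?J + (real x - ?J)))
      = sqrt (fact y * fact (N - y) * fact (nat (2 - q)) * fact (nat (2 + q)) * fact (N - x) * fact x)"
  proof -
    have "?J + (real y - ?J) = real y" "?J + (real x - ?J) = real x" by simp_all
    moreover have "?J - (real y - ?J) = real (N - y)" "?J - (real x - ?J) = real (N - x)"
      using x y by (simp_all add: of_nat_diff)
    moreover have "2 - real_of_int q = real_of_int (2 - q)" "2 + real_of_int q = real_of_int (2 + q)" by simp_all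
    ultimately show ?thesis by (simp only: rfact_nat rfact_int)
  qed
  have S: "{t \<in> {0..nat \<lfloor>2 + ?J - ?J\<rfloor>}. real t \<le> 2 - real_of_int q \<and> real t \<le> ?J + (real x - ?J) \<and>
                 0 \<le> ?J - ?J + real_of_int q + real t \<and> 0 \<le> ?J - 2 - (real x - ?J) + real t}
      = {t \<in> {0..2}. int t \<le> 2 - q \<and> t \<le> x \<and> 0 \<le> q + int t \<and> x + 2 \<le> N + t}"
  proof -
    have "nat \<lfloor>2 + ?J - ?J\<rfloor> = 2" by simp
    moreover have "\<And>t. (real t \<le> 2 - real_of_int q) = (int t \<le> 2 - q)"
      by (metis of_int_le_iff of_int_of_nat_eq of_int_diff of_int_numeral)
    moreover have "\<And>t. (real t \<le> ?J + (real x - ?J)) = (t \<le> x)" by simp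
    moreover have "\<And>t. (0 \<le> ?J - ?J + real_of_int q + real t) = (0 \<le> q + int t)"
      by (metis add.commute diff_self of_int_0_le_iff of_int_add of_int_of_nat_eq add_0)
    moreover have "\<And>t. (0 \<le> ?J - 2 - (real x - ?J) + real t) = (x + 2 \<le> N + t)"
    proof -
      fix t
      have "?J - 2 - (real x - ?J) + real t = real N + real t - real x - 2" by simp
      then show "(0 \<le> ?J - 2 - (real x - ?J) + real t) = (x + 2 \<le> N + t)" by linarith
    qed
    ultimately show ?thesis by simp
  qed
  have T: "\<And>t. t \<in> {t \<in> {0..2}. int t \<le> 2 - q \<and> t \<le> x \<and> 0 \<le> q + int t \<and> x + 2 \<le> N + t} \<Longrightarrow>
     (-1) ^ t / (fact t * rfact (2 + ?J - ?J - real t) * rfact (2 - real_of_int q - real t)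
                 * rfact (?J + (real x - ?J) - real t) * rfact (?J - ?J + real_of_int q + real t)
                 * rfact (?J - 2 - (real x - ?J) + real t))
     = (-1) ^ t / (fact t * fact (2 - t) * fact (nat (2 - q - int t)) * fact (x - t) * fact (nat (q + int t)) * fact (N + t - x - 2))"
  proof -
    fix t assume t: "t \<in> {t \<in> {0..2}. int t \<le> 2 - q \<and> t \<le> x \<and> 0 \<le> q + int t \<and> x + 2 \<le> N + t}"
    have "2 + ?J - ?J - real t = real (2 - t)" using t by (simp add: of_nat_diff)
    moreover have "2 - real_of_int q - real t = real_of_int (2 - q - int t)" by simp
    moreover have "?J + (real x - ?J) - real t = real (x - t)" using t by (simp add: of_nat_diff)
    moreover have "?J - ?J + real_of_int q + real t = real_of_int (q + int t)" by simp
    moreover have "?J - 2 - (real x - ?J) + real t = real (N + t - x - 2)" using t by (simp add: of_nat_diff)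
    ultimately show "(-1) ^ t / (fact t * rfact (2 + ?J - ?J - real t) * rfact (2 - real_of_int q - real t)
                 * rfact (?J + (real x - ?J) - real t) * rfact (?J - ?J + real_of_int q + real t)
                 * rfact (?J - 2 - (real x - ?J) + real t))
     = (-1) ^ t / (fact t * fact (2 - t) * fact (nat (2 - q - int t)) * fact (x - t) * fact (nat (q + int t)) * fact (N + t - x - 2))"
      by (simp only: rfact_nat rfact_int)
  qed
  show ?thesis
    unfolding clebsch_gordan_def
    apply (subst if_P[OF cond])
    apply (simp only: e1 e2 S)
    apply (simp only: sum.cong[OF refl T])
    done
qed


lemma sum_sing: "sum f {x} = f x" by simp

lemma sqrt_sq_mult: "c \<ge> 0 \<Longrightarrow> sqrt (k * c^2) = sqrt k * (c::real)"
  by (simp add: real_sqrt_mult)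

lemma cg_m2:
  assumes N: "N = a + b + 2"
  shows "clebsch_gordan 2 (-2) (real N / 2) (real (a + 2) - real N / 2) (real N / 2) (real a - real N / 2)
     = A0 N * (sqrt 24 / 4) * sqrt (real ((a + 2) * (a + 1) * (b + 2) * (b + 1)))"
proof -
  have G: "clebsch_gordan 2 (of_int (-2)) (real N / 2) (real (a + 2) - real N / 2) (real N / 2) (real a - real N / 2) =
    A0 N * sqrt (fact a * fact (N - a) * fact (nat (2 - (-2))) * fact (nat (2 + (-2))) * fact (N - (a + 2)) * fact (a + 2)) *
    (\<Sum>t \<in> {t \<in> {0..2}. int t \<le> 2 - (-2) \<and> t \<le> a + 2 \<and> 0 \<le> (-2) + int t \<and> a + 2 + 2 \<le> N + t}.
       (-1) ^ t / (fact t * fact (2 - t) * fact (nat (2 - (-2) - int t)) * fact (a + 2 - t) * fact (nat ((-2) + int t)) * fact (N + t - (a + 2) - 2)))"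
    by (rule cg_general) (use N in auto)
  have S: "{t \<in> {0..2}. int t \<le> 2 - (-2) \<and> t \<le> a + 2 \<and> 0 \<le> (-2) + int t \<and> a + 2 + 2 \<le> N + t} = {2}"
    using N by auto
  have f1: "(fact (a + 2) :: real) = real (a + 2) * real (a + 1) * fact a"
    by (simp add: numeral_2_eq_2 fact_Suc algebra_simps)
  have f2: "(fact (b + 2) :: real) = real (b + 2) * real (b + 1) * fact b"
    by (simp add: numeral_2_eq_2 fact_Suc algebra_simps)
  have Na: "N - a = b + 2" "N - (a + 2) = b" "N + 2 - (a + 2) - 2 = b" using N by auto
  have sq: "sqrt (fact a * fact (b + 2) * fact 4 * fact 0 * fact b * fact (a + 2))
     = sqrt (24 * real ((a + 2) * (a + 1) * (b + 2) * (b + 1))) * (fact a * fact b)"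
  proof -
    have "(fact a * fact (b + 2) * fact 4 * fact 0 * fact b * fact (a + 2) :: real)
       = (24 * real ((a + 2) * (a + 1) * (b + 2) * (b + 1))) * (fact a * fact b)^2"
      unfolding f1 f2 by (simp add: fact_numeral power2_eq_square algebra_simps)
    then show ?thesis by (simp add: sqrt_sq_mult)
  qed
  have e: "nat (2 - (-2)) = 4" "nat (2 + (-2)) = 0" "nat (2 - (-2) - int 2) = 2" "nat ((-2) + int 2) = 0" "a + 2 - 2 = a"
    by simp_all
  have "clebsch_gordan 2 (-2) (real N / 2) (real (a + 2) - real N / 2) (real N / 2) (real a - real N / 2)
     = A0 N * sqrt (fact a * fact (b + 2) * fact 4 * fact 0 * fact b * fact (a + 2)) *
       ((-1) ^ 2 / (fact 2 * fact (2 - 2) * fact 2 * fact a * fact 0 * fact b))"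
    using G unfolding S Na by (simp only: sum_sing e of_int_minus of_int_numeral Na)
  also have "\<dots> = A0 N * sqrt (24 * real ((a + 2) * (a + 1) * (b + 2) * (b + 1))) * (fact a * fact b) * (1 / (4 * fact a * fact b))"
    unfolding sq by (simp add: fact_numeral)
  also have "\<dots> = A0 N * (sqrt 24 / 4) * sqrt (real ((a + 2) * (a + 1) * (b + 2) * (b + 1)))"
    by (simp only: real_sqrt_mult) (simp add: field_simps)
  finally show ?thesis .
qed


lemma cg_p2:
  assumes N: "N = a + b + 2"
  shows "clebsch_gordan 2 2 (real N / 2) (real a - real N / 2) (real N / 2) (real (a + 2) - real N / 2)
     = A0 N * (sqrt 24 / 4) * sqrt (real ((a + 2) * (a + 1) * (b + 2) * (b + 1)))"
proof -
  have G: "clebsch_gordan 2 (of_int 2) (real N / 2) (real a - real N / 2) (real N / 2) (real (a + 2) - real N / 2) =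
    A0 N * sqrt (fact (a + 2) * fact (N - (a + 2)) * fact (nat (2 - 2)) * fact (nat (2 + 2)) * fact (N - a) * fact a) *
    (\<Sum>t \<in> {t \<in> {0..2}. int t \<le> 2 - 2 \<and> t \<le> a \<and> 0 \<le> 2 + int t \<and> a + 2 \<le> N + t}.
       (-1) ^ t / (fact t * fact (2 - t) * fact (nat (2 - 2 - int t)) * fact (a - t) * fact (nat (2 + int t)) * fact (N + t - a - 2)))"
    by (rule cg_general) (use N in auto)
  have S: "{t \<in> {0..2}. int t \<le> 2 - 2 \<and> t \<le> a \<and> 0 \<le> 2 + int t \<and> a + 2 \<le> N + t} = {0}"
    using N by auto
  have f1: "(fact (a + 2) :: real) = real (a + 2) * real (a + 1) * fact a"
    by (simp add: numeral_2_eq_2 fact_Suc algebra_simps)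
  have f2: "(fact (b + 2) :: real) = real (b + 2) * real (b + 1) * fact b"
    by (simp add: numeral_2_eq_2 fact_Suc algebra_simps)
  have Na: "N - a = b + 2" "N - (a + 2) = b" "N + 0 - a - 2 = b" using N by auto
  have sq: "sqrt (fact (a + 2) * fact b * fact 0 * fact 4 * fact (b + 2) * fact a)
     = sqrt (24 * real ((a + 2) * (a + 1) * (b + 2) * (b + 1))) * (fact a * fact b)"
  proof -
    have "(fact (a + 2) * fact b * fact 0 * fact 4 * fact (b + 2) * fact a :: real)
       = (24 * real ((a + 2) * (a + 1) * (b + 2) * (b + 1))) * (fact a * fact b)^2"
      unfolding f1 f2 by (simp add: fact_numeral power2_eq_square algebra_simps)
    then show ?thesis by (simp add: sqrt_sq_mult)
  qed
  have e: "nat (2 - 2) = 0" "nat (2 + 2) = 4" "nat (2 - 2 - int 0) = 0" "nat (2 + int 0) = 2" "a - 0 = a"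
    by simp_all
  have "clebsch_gordan 2 2 (real N / 2) (real a - real N / 2) (real N / 2) (real (a + 2) - real N / 2)
     = A0 N * sqrt (fact (a + 2) * fact b * fact 0 * fact 4 * fact (b + 2) * fact a) *
       ((-1) ^ 0 / (fact 0 * fact (2 - 0) * fact 0 * fact a * fact 2 * fact b))"
    using G unfolding S Na by (simp only: sum_sing e of_int_numeral Na)
  also have "\<dots> = A0 N * sqrt (24 * real ((a + 2) * (a + 1) * (b + 2) * (b + 1))) * (fact a * fact b) * (1 / (4 * fact a * fact b))"
    unfolding sq by (simp add: fact_numeral)
  also have "\<dots> = A0 N * (sqrt 24 / 4) * sqrt (real ((a + 2) * (a + 1) * (b + 2) * (b + 1)))"
    by (simp only: real_sqrt_mult) (simp add: field_simps)
  finally show ?thesis .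
qed

lemma sum_012: "sum g {0..2::nat} = g 0 + g 1 + g 2"
  by (simp add: numeral_2_eq_2 atLeast0AtMost atMost_Suc algebra_simps)

lemma fact_red1: "n \<ge> 1 \<Longrightarrow> (fact n :: real) = real n * fact (n - 1)"
  by (simp add: fact_reduce)

lemma cg_m1:
  assumes N: "N = a + b + 1" "N \<ge> 2"
  shows "clebsch_gordan 2 (-1) (real N / 2) (real (a + 1) - real N / 2) (real N / 2) (real a - real N / 2)
     = A0 N * sqrt 6 * sqrt (real ((a + 1) * (b + 1))) * ((real a - real b) / 2)"
proof -
  have G: "clebsch_gordan 2 (of_int (-1)) (real N / 2) (real (a + 1) - real N / 2) (real N / 2) (real a - real N / 2) =
    A0 N * sqrt (fact a * fact (N - a) * fact (nat (2 - (-1))) * fact (nat (2 + (-1))) * fact (N - (a + 1)) * fact (a + 1)) *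
    (\<Sum>t \<in> {t \<in> {0..2}. int t \<le> 2 - (-1) \<and> t \<le> a + 1 \<and> 0 \<le> (-1) + int t \<and> a + 1 + 2 \<le> N + t}.
       (-1) ^ t / (fact t * fact (2 - t) * fact (nat (2 - (-1) - int t)) * fact (a + 1 - t) * fact (nat ((-1) + int t)) * fact (N + t - (a + 1) - 2)))"
    by (rule cg_general) (use N in auto)
  define g where "g = (\<lambda>t::nat. (-1) ^ t / (fact t * fact (2 - t) * fact (nat (2 - (-1) - int t)) * fact (a + 1 - t) * fact (nat ((-1) + int t)) * fact (N + t - (a + 1) - 2)) :: real)"
  have Ssum: "(\<Sum>t \<in> {t \<in> {0..2}. int t \<le> 2 - (-1) \<and> t \<le> a + 1 \<and> 0 \<le> (-1) + int t \<and> a + 1 + 2 \<le> N + t}. g t)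
     = (if 1 \<le> b then g 1 else 0) + (if 1 \<le> a then g 2 else 0)"
    by (subst sum.inter_filter) (use N in \<open>auto simp: sum_012\<close>)
  have g1: "1 \<le> b \<Longrightarrow> g 1 * (fact a * fact b) = - real b / 2"
  proof -
    assume b: "1 \<le> b"
    have "N + 1 - (a + 1) - 2 = b - 1" using N by simp
    then have "g 1 = -1 / (2 * fact a * fact (b - 1))" by (simp add: g_def)
    then have X: "g 1 * (fact a * fact (b - 1)) = - 1 / 2" by simp
    have "g 1 * (fact a * fact b) = real b * (g 1 * (fact a * fact (b - 1)))"
      by (simp add: fact_red1[OF b] algebra_simps)
    also have "\<dots> = - real b / 2" unfolding X by simp
    finally show ?thesis .
  qed
  have g2: "1 \<le> a \<Longrightarrow> g 2 * (fact a * fact b) = real a / 2"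
  proof -
    assume a: "1 \<le> a"
    have "N + 2 - (a + 1) - 2 = b" using N by simp
    moreover have "a + 1 - 2 = a - 1" by simp
    ultimately have "g 2 = 1 / (2 * fact (a - 1) * fact b)" by (simp add: g_def numeral_3_eq_3)
    then have X: "g 2 * (fact (a - 1) * fact b) = 1 / 2" by simp
    have "g 2 * (fact a * fact b) = real a * (g 2 * (fact (a - 1) * fact b))"
      by (simp add: fact_red1[OF a] algebra_simps)
    also have "\<dots> = real a / 2" unfolding X by simp
    finally show ?thesis .
  qed
  have sumv: "((if 1 \<le> b then g 1 else 0) + (if 1 \<le> a then g 2 else 0)) * (fact a * fact b) = (real a - real b) / 2"
    using g1 g2 by (cases "1 \<le> a"; cases "1 \<le> b") (auto simp: algebra_simps)
  have Na: "N - a = b + 1" "N - (a + 1) = b" using N by auto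
  have sq: "sqrt (fact a * fact (b + 1) * fact 3 * fact 1 * fact b * fact (a + 1))
     = sqrt (6 * real ((a + 1) * (b + 1))) * (fact a * fact b)"
  proof -
    have "(fact a * fact (b + 1) * fact 3 * fact 1 * fact b * fact (a + 1) :: real)
       = (6 * real ((a + 1) * (b + 1))) * (fact a * fact b)^2"
      by (simp add: fact_numeral power2_eq_square algebra_simps)
    then show ?thesis by (simp add: sqrt_sq_mult)
  qed
  have e: "nat (2 - (-1)) = 3" "nat (2 + (-1)) = 1" by simp_all
  have "clebsch_gordan 2 (-1) (real N / 2) (real (a + 1) - real N / 2) (real N / 2) (real a - real N / 2)
     = A0 N * sqrt (fact a * fact (b + 1) * fact 3 * fact 1 * fact b * fact (a + 1)) *
       ((if 1 \<le> b then g 1 else 0) + (if 1 \<le> a then g 2 else 0))"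
    using G unfolding Ssum[symmetric] unfolding g_def Na e by (simp only: of_int_minus of_int_1)
  also have "\<dots> = A0 N * sqrt (6 * real ((a + 1) * (b + 1))) * (((if 1 \<le> b then g 1 else 0) + (if 1 \<le> a then g 2 else 0)) * (fact a * fact b))"
    unfolding sq by (simp only: mult.assoc mult.commute mult.left_commute)
  also have "\<dots> = A0 N * sqrt 6 * sqrt (real ((a + 1) * (b + 1))) * ((real a - real b) / 2)"
    unfolding sumv by (simp only: real_sqrt_mult of_nat_mult mult.assoc)
  finally show ?thesis .
qed


lemma cg_p1:
  assumes N: "N = a + b + 1" "N \<ge> 2"
  shows "clebsch_gordan 2 1 (real N / 2) (real a - real N / 2) (real N / 2) (real (a + 1) - real N / 2)
     = A0 N * sqrt 6 * sqrt (real ((a + 1) * (b + 1))) * ((real b - real a) / 2)"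
proof -
  have G: "clebsch_gordan 2 (of_int 1) (real N / 2) (real a - real N / 2) (real N / 2) (real (a + 1) - real N / 2) =
    A0 N * sqrt (fact (a + 1) * fact (N - (a + 1)) * fact (nat (2 - 1)) * fact (nat (2 + 1)) * fact (N - a) * fact a) *
    (\<Sum>t \<in> {t \<in> {0..2}. int t \<le> 2 - 1 \<and> t \<le> a \<and> 0 \<le> 1 + int t \<and> a + 2 \<le> N + t}.
       (-1) ^ t / (fact t * fact (2 - t) * fact (nat (2 - 1 - int t)) * fact (a - t) * fact (nat (1 + int t)) * fact (N + t - a - 2)))"
    by (rule cg_general) (use N in auto)
  define g where "g = (\<lambda>t::nat. (-1) ^ t / (fact t * fact (2 - t) * fact (nat (2 - 1 - int t)) * fact (a - t) * fact (nat (1 + int t)) * fact (N + t - a - 2)) :: real)"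
  have Ssum: "(\<Sum>t \<in> {t \<in> {0..2}. int t \<le> 2 - 1 \<and> t \<le> a \<and> 0 \<le> 1 + int t \<and> a + 2 \<le> N + t}. g t)
     = (if 1 \<le> b then g 0 else 0) + (if 1 \<le> a then g 1 else 0)"
    by (subst sum.inter_filter) (use N in \<open>auto simp: sum_012\<close>)
  have g0: "1 \<le> b \<Longrightarrow> g 0 * (fact a * fact b) = real b / 2"
  proof -
    assume b: "1 \<le> b"
    have "N + 0 - a - 2 = b - 1" using N by simp
    then have "g 0 = 1 / (2 * fact a * fact (b - 1))" by (simp add: g_def)
    then have X: "g 0 * (fact a * fact (b - 1)) = 1 / 2" by simp
    have "g 0 * (fact a * fact b) = real b * (g 0 * (fact a * fact (b - 1)))"
      by (simp add: fact_red1[OF b] algebra_simps)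
    also have "\<dots> = real b / 2" unfolding X by simp
    finally show ?thesis .
  qed
  have g1: "1 \<le> a \<Longrightarrow> g 1 * (fact a * fact b) = - real a / 2"
  proof -
    assume a: "1 \<le> a"
    have "N + 1 - a - 2 = b" using N by simp
    then have "g 1 = - 1 / (2 * fact (a - 1) * fact b)" by (simp add: g_def)
    then have X: "g 1 * (fact (a - 1) * fact b) = - 1 / 2" by simp
    have "g 1 * (fact a * fact b) = real a * (g 1 * (fact (a - 1) * fact b))"
      by (simp add: fact_red1[OF a] algebra_simps)
    also have "\<dots> = - real a / 2" unfolding X by simp
    finally show ?thesis .
  qed
  have sumv: "((if 1 \<le> b then g 0 else 0) + (if 1 \<le> a then g 1 else 0)) * (fact a * fact b) = (real b - real a) / 2"
    using g0 g1 by (cases "1 \<le> a"; cases "1 \<le> b") (auto simp: algebra_simps)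
  have Na: "N - a = b + 1" "N - (a + 1) = b" using N by auto
  have sq: "sqrt (fact (a + 1) * fact b * fact 1 * fact 3 * fact (b + 1) * fact a)
     = sqrt (6 * real ((a + 1) * (b + 1))) * (fact a * fact b)"
  proof -
    have "(fact (a + 1) * fact b * fact 1 * fact 3 * fact (b + 1) * fact a :: real)
       = (6 * real ((a + 1) * (b + 1))) * (fact a * fact b)^2"
      by (simp add: fact_numeral power2_eq_square algebra_simps)
    then show ?thesis by (simp add: sqrt_sq_mult)
  qed
  have e: "nat (2 - 1) = 1" "nat (2 + 1) = 3" by simp_all
  have "clebsch_gordan 2 1 (real N / 2) (real a - real N / 2) (real N / 2) (real (a + 1) - real N / 2)
     = A0 N * sqrt (fact (a + 1) * fact b * fact 1 * fact 3 * fact (b + 1) * fact a) *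
       ((if 1 \<le> b then g 0 else 0) + (if 1 \<le> a then g 1 else 0))"
    using G unfolding Ssum[symmetric] unfolding g_def Na e by (simp only: of_int_1)
  also have "\<dots> = A0 N * sqrt (6 * real ((a + 1) * (b + 1))) * (((if 1 \<le> b then g 0 else 0) + (if 1 \<le> a then g 1 else 0)) * (fact a * fact b))"
    unfolding sq by (simp only: mult.assoc mult.commute mult.left_commute)
  also have "\<dots> = A0 N * sqrt 6 * sqrt (real ((a + 1) * (b + 1))) * ((real b - real a) / 2)"
    unfolding sumv by (simp only: real_sqrt_mult of_nat_mult mult.assoc)
  finally show ?thesis .
qed

lemma fact_red2: "n \<ge> 2 \<Longrightarrow> (fact n :: real) = real n * real (n - 1) * fact (n - 2)"
proof -
  assume n: "n \<ge> 2"
  then obtain k where k: "n = k + 2" by (metis add.commute le_Suc_ex)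
  show ?thesis unfolding k by (simp add: numeral_2_eq_2 fact_Suc algebra_simps)
qed

lemma cg_0:
  assumes N: "N = a + b" "N \<ge> 2"
  shows "clebsch_gordan 2 0 (real N / 2) (real a - real N / 2) (real N / 2) (real a - real N / 2)
     = A0 N * ((real a * (real a - 1) + real b * (real b - 1)) / 2 - 2 * real a * real b)"
proof -
  have G: "clebsch_gordan 2 (of_int 0) (real N / 2) (real a - real N / 2) (real N / 2) (real a - real N / 2) =
    A0 N * sqrt (fact a * fact (N - a) * fact (nat (2 - 0)) * fact (nat (2 + 0)) * fact (N - a) * fact a) *
    (\<Sum>t \<in> {t \<in> {0..2}. int t \<le> 2 - 0 \<and> t \<le> a \<and> 0 \<le> 0 + int t \<and> a + 2 \<le> N + t}.
       (-1) ^ t / (fact t * fact (2 - t) * fact (nat (2 - 0 - int t)) * fact (a - t) * fact (nat (0 + int t)) * fact (N + t - a - 2)))"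
    by (rule cg_general) (use N in auto)
  define g where "g = (\<lambda>t::nat. (-1) ^ t / (fact t * fact (2 - t) * fact (nat (2 - 0 - int t)) * fact (a - t) * fact (nat (0 + int t)) * fact (N + t - a - 2)) :: real)"
  have Ssum: "(\<Sum>t \<in> {t \<in> {0..2}. int t \<le> 2 - 0 \<and> t \<le> a \<and> 0 \<le> 0 + int t \<and> a + 2 \<le> N + t}. g t)
     = (if 2 \<le> b then g 0 else 0) + (if 1 \<le> a \<and> 1 \<le> b then g 1 else 0) + (if 2 \<le> a then g 2 else 0)"
    by (subst sum.inter_filter) (use N in \<open>auto simp: sum_012\<close>)
  have g0: "2 \<le> b \<Longrightarrow> g 0 * (fact a * fact b) = real b * (real b - 1) / 4"
  proof -
    assume b: "2 \<le> b"
    have "N + 0 - a - 2 = b - 2" using N by simp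
    then have "g 0 = 1 / (4 * fact a * fact (b - 2))" by (simp add: g_def)
    then have X: "g 0 * (fact a * fact (b - 2)) = 1 / 4" by simp
    have "g 0 * (fact a * fact b) = real b * real (b - 1) * (g 0 * (fact a * fact (b - 2)))"
      by (simp add: fact_red2[OF b] algebra_simps)
    also have "\<dots> = real b * (real b - 1) / 4" unfolding X using b by (simp add: of_nat_diff)
    finally show ?thesis .
  qed
  have g1: "1 \<le> a \<Longrightarrow> 1 \<le> b \<Longrightarrow> g 1 * (fact a * fact b) = - (real a * real b)"
  proof -
    assume a: "1 \<le> a" and b: "1 \<le> b"
    have "N + 1 - a - 2 = b - 1" using N b by simp
    then have "g 1 = - 1 / (fact (a - 1) * fact (b - 1))" by (simp add: g_def)
    then have X: "g 1 * (fact (a - 1) * fact (b - 1)) = - 1" by simp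
    have "g 1 * (fact a * fact b) = real a * real b * (g 1 * (fact (a - 1) * fact (b - 1)))"
      by (simp add: fact_red1[OF a] fact_red1[OF b] algebra_simps)
    also have "\<dots> = - (real a * real b)" unfolding X by simp
    finally show ?thesis .
  qed
  have g2: "2 \<le> a \<Longrightarrow> g 2 * (fact a * fact b) = real a * (real a - 1) / 4"
  proof -
    assume a: "2 \<le> a"
    have "N + 2 - a - 2 = b" using N by simp
    then have "g 2 = 1 / (4 * fact (a - 2) * fact b)" by (simp add: g_def)
    then have X: "g 2 * (fact (a - 2) * fact b) = 1 / 4" by simp
    have "g 2 * (fact a * fact b) = real a * real (a - 1) * (g 2 * (fact (a - 2) * fact b))"
      by (simp add: fact_red2[OF a] algebra_simps)
    also have "\<dots> = real a * (real a - 1) / 4" unfolding X using a by (simp add: of_nat_diff)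
    finally show ?thesis .
  qed
  have b01: "\<not> 2 \<le> b \<Longrightarrow> real b * (real b - 1) = 0" by (cases b) auto
  have a01: "\<not> 2 \<le> a \<Longrightarrow> real a * (real a - 1) = 0" by (cases a) auto
  have sumv: "((if 2 \<le> b then g 0 else 0) + (if 1 \<le> a \<and> 1 \<le> b then g 1 else 0) + (if 2 \<le> a then g 2 else 0)) * (fact a * fact b)
      = real b * (real b - 1) / 4 - real a * real b + real a * (real a - 1) / 4"
  proof -
    have t0: "(if 2 \<le> b then g 0 else 0) * (fact a * fact b) = real b * (real b - 1) / 4"
      using g0 b01 by (cases "2 \<le> b") auto
    have t1: "(if 1 \<le> a \<and> 1 \<le> b then g 1 else 0) * (fact a * fact b) = - (real a * real b)"
      using g1 by (cases "1 \<le> a \<and> 1 \<le> b") auto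
    have t2: "(if 2 \<le> a then g 2 else 0) * (fact a * fact b) = real a * (real a - 1) / 4"
      using g2 a01 by (cases "2 \<le> a") auto
    show ?thesis unfolding distrib_right t0 t1 t2 by simp
  qed
  have Na: "N - a = b" using N by auto
  have sq: "sqrt (fact a * fact b * fact 2 * fact 2 * fact b * fact a) = 2 * (fact a * fact b)"
  proof -
    have "(fact a * fact b * fact 2 * fact 2 * fact b * fact a :: real) = (2 * (fact a * fact b))^2"
      by (simp add: fact_numeral power2_eq_square algebra_simps)
    then have "sqrt (fact a * fact b * fact 2 * fact 2 * fact b * fact a) = sqrt ((2 * (fact a * fact b))^2)"
      by (rule arg_cong)
    also have "\<dots> = 2 * (fact a * fact b)" by (simp only: real_sqrt_abs) simp
    finally show ?thesis .
  qed
  have e: "nat (2 - 0) = 2" "nat (2 + 0) = 2" by simp_all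
  have "clebsch_gordan 2 0 (real N / 2) (real a - real N / 2) (real N / 2) (real a - real N / 2)
     = A0 N * sqrt (fact a * fact b * fact 2 * fact 2 * fact b * fact a) *
       ((if 2 \<le> b then g 0 else 0) + (if 1 \<le> a \<and> 1 \<le> b then g 1 else 0) + (if 2 \<le> a then g 2 else 0))"
    using G unfolding Ssum[symmetric] unfolding g_def Na e by (simp only: of_int_0)
  also have "\<dots> = A0 N * 2 * (((if 2 \<le> b then g 0 else 0) + (if 1 \<le> a \<and> 1 \<le> b then g 1 else 0) + (if 2 \<le> a then g 2 else 0)) * (fact a * fact b))"
    unfolding sq by (simp only: mult.assoc mult.commute mult.left_commute)
  also have "\<dots> = A0 N * ((real a * (real a - 1) + real b * (real b - 1)) / 2 - 2 * real a * real b)"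
    unfolding sumv by (simp add: field_simps)
  finally show ?thesis .
qed


lemma spinJ_eq: "d \<ge> 1 \<Longrightarrow> spinJ d = real (d - 1) / 2"
  by (simp add: spinJ_def of_nat_diff)

lemma mval_eq: "d \<ge> 1 \<Longrightarrow> mval d x = real x - real (d - 1) / 2"
  by (simp add: mval_def spinJ_eq)

lemma aa_eq: assumes "k < d" shows "aa d k = complex_of_real (sqrt (real ((d - 1 - k) * (k + 1))))"
proof -
  have t: "\<And>r s::real. (r - 1)/2 * ((r-1)/2 + 1) - (s - (r-1)/2) * (s - (r-1)/2 + 1) = (r - 1 - s) * (s + 1)"
    by (simp add: field_simps)
  have r: "real (d - 1 - k) = real d - 1 - real k" using assms by (simp add: of_nat_diff)
  have e: "spinJ d * (spinJ d + 1) - mval d k * (mval d k + 1) = real ((d - 1 - k) * (k + 1))"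
    unfolding spinJ_def mval_def of_nat_mult r using t by simp
  show ?thesis unfolding aa_def e by (rule refl)
qed

lemma T_idx: assumes "k < d" "i < d"
  shows "spin_tensor d 2 q $$ (k,i) = (if mval d k = mval d i + of_int q then
       complex_of_real (sqrt (5 / real d) * clebsch_gordan 2 (of_int q) (spinJ d) (mval d i) (spinJ d) (mval d k)) else 0)"
proof -
  have "2 * spinJ d + 1 = real d" by (simp add: spinJ_def field_simps)
  moreover have "2 * real (2::nat) + 1 = (5::real)" by simp
  ultimately show ?thesis using assms by (simp add: spin_tensor_def)
qed

lemma mval_cond: "d \<ge> 1 \<Longrightarrow> (mval d k = mval d i + of_int q) = (int k = int i + q)"
proof -
  assume "d \<ge> 1"
  have "(mval d k = mval d i + of_int q) = (real k = real i + real_of_int q)" by (simp add: mval_def)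
  also have "\<dots> = (real_of_int (int k) = real_of_int (int i + q))" by simp
  also have "\<dots> = (int k = int i + q)" by (simp only: of_int_eq_iff)
  finally show ?thesis .
qed

definition c5 :: "nat \<Rightarrow> real" where "c5 d = sqrt (5 / real d)"

lemma c5_pos: "d \<ge> 1 \<Longrightarrow> c5 d > 0" by (simp add: c5_def)

lemma T_m1: assumes d: "d \<ge> 3" and ki: "k < d" "i < d"
  shows "spin_tensor d 2 (-1) $$ (k,i) = (if i = k + 1 then
     complex_of_real (c5 d * (A0 (d - 1) * sqrt 6 * sqrt (real ((k + 1) * (d - 1 - k))) * ((real k - real (d - 1 - k - 1)) / 2))) else 0)"
proof (cases "i = k + 1")
  case True
  define b where "b = d - 1 - k - 1"
  have N: "d - 1 = k + b + 1" "d - 1 \<ge> 2" using d ki True by (auto simp: b_def)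
  have c: "mval d k = mval d i + of_int (-1)" using mval_cond[of d k i "-1"] d True by simp
  have cg: "clebsch_gordan 2 (-1) (real (d - 1) / 2) (real (k + 1) - real (d - 1) / 2) (real (d - 1) / 2) (real k - real (d - 1) / 2)
     = A0 (d - 1) * sqrt 6 * sqrt (real ((k + 1) * (b + 1))) * ((real k - real b) / 2)"
    by (rule cg_m1[OF N])
  have b1: "b + 1 = d - 1 - k" using N by simp
  have sj: "spinJ d = real (d - 1) / 2" using d by (simp add: spinJ_eq)
  have mi: "mval d i = real (k + 1) - real (d - 1) / 2" using d True by (simp add: mval_eq)
  have mk: "mval d k = real k - real (d - 1) / 2" using d by (simp add: mval_eq)
  have "spin_tensor d 2 (-1) $$ (k,i) = complex_of_real (sqrt (5 / real d) * clebsch_gordan 2 (of_int (-1)) (spinJ d) (mval d i) (spinJ d) (mval d k))"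
    by (simp only: T_idx[OF ki] if_P[OF c])
  also have "\<dots> = complex_of_real (sqrt (5 / real d) * (A0 (d - 1) * sqrt 6 * sqrt (real ((k + 1) * (b + 1))) * ((real k - real b) / 2)))"
    by (simp only: sj mi mk of_int_minus of_int_1 cg)
  also have "\<dots> = complex_of_real (c5 d * (A0 (d - 1) * sqrt 6 * sqrt (real ((k + 1) * (d - 1 - k))) * ((real k - real (d - 1 - k - 1)) / 2)))"
    unfolding c5_def b1 unfolding b_def by (rule refl)
  finally show ?thesis using True by simp
next
  case False
  then have "\<not> (mval d k = mval d i + of_int (-1))" using mval_cond[of d k i "-1"] d by simp
  then show ?thesis using False T_idx[OF ki, of "-1"] by simp
qed


lemma T_m2: assumes d: "d \<ge> 3" and ki: "k < d" "i < d"
  shows "spin_tensor d 2 (-2) $$ (k,i) = (if i = k + 2 then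
     complex_of_real (c5 d * (A0 (d - 1) * (sqrt 24 / 4) * sqrt (real ((k + 2) * (k + 1) * (d - 1 - k) * (d - 1 - k - 1))))) else 0)"
proof (cases "i = k + 2")
  case True
  define b where "b = d - 1 - k - 2"
  have N: "d - 1 = k + b + 2" using d ki True by (auto simp: b_def)
  have c: "mval d k = mval d i + of_int (-2)" using mval_cond[of d k i "-2"] d True by simp
  have cg: "clebsch_gordan 2 (-2) (real (d - 1) / 2) (real (k + 2) - real (d - 1) / 2) (real (d - 1) / 2) (real k - real (d - 1) / 2)
     = A0 (d - 1) * (sqrt 24 / 4) * sqrt (real ((k + 2) * (k + 1) * (b + 2) * (b + 1)))"
    by (rule cg_m2[OF N])
  have b1: "b + 2 = d - 1 - k" "b + 1 = d - 1 - k - 1" using N by simp_all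
  have sj: "spinJ d = real (d - 1) / 2" using d by (simp add: spinJ_eq)
  have mi: "mval d i = real (k + 2) - real (d - 1) / 2" using d True by (simp add: mval_eq)
  have mk: "mval d k = real k - real (d - 1) / 2" using d by (simp add: mval_eq)
  have "spin_tensor d 2 (-2) $$ (k,i) = complex_of_real (sqrt (5 / real d) * clebsch_gordan 2 (of_int (-2)) (spinJ d) (mval d i) (spinJ d) (mval d k))"
    by (simp only: T_idx[OF ki] if_P[OF c])
  also have "\<dots> = complex_of_real (sqrt (5 / real d) * (A0 (d - 1) * (sqrt 24 / 4) * sqrt (real ((k + 2) * (k + 1) * (b + 2) * (b + 1)))))"
    by (simp only: sj mi mk of_int_minus of_int_numeral cg)
  also have "\<dots> = complex_of_real (c5 d * (A0 (d - 1) * (sqrt 24 / 4) * sqrt (real ((k + 2) * (k + 1) * (d - 1 - k) * (d - 1 - k - 1)))))"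
    unfolding c5_def b1 by (rule refl)
  finally show ?thesis using True by simp
next
  case False
  then have "\<not> (mval d k = mval d i + of_int (-2))" using mval_cond[of d k i "-2"] d by simp
  then show ?thesis using False T_idx[OF ki, of "-2"] by simp
qed

lemma T_0: assumes d: "d \<ge> 3" and ki: "k < d" "i < d"
  shows "spin_tensor d 2 0 $$ (k,i) = (if i = k then
     complex_of_real (c5 d * (A0 (d - 1) * ((real k * (real k - 1) + real (d - 1 - k) * (real (d - 1 - k) - 1)) / 2 - 2 * real k * real (d - 1 - k)))) else 0)"
proof (cases "i = k")
  case True
  define b where "b = d - 1 - k"
  have N: "d - 1 = k + b" "d - 1 \<ge> 2" using d ki True by (auto simp: b_def)
  have c: "mval d k = mval d i + of_int 0" using True by simp
  have cg: "clebsch_gordan 2 0 (real (d - 1) / 2) (real k - real (d - 1) / 2) (real (d - 1) / 2) (real k - real (d - 1) / 2)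
     = A0 (d - 1) * ((real k * (real k - 1) + real b * (real b - 1)) / 2 - 2 * real k * real b)"
    by (rule cg_0[OF N])
  have sj: "spinJ d = real (d - 1) / 2" using d by (simp add: spinJ_eq)
  have mi: "mval d i = real k - real (d - 1) / 2" using d True by (simp add: mval_eq)
  have mk: "mval d k = real k - real (d - 1) / 2" using d by (simp add: mval_eq)
  have "spin_tensor d 2 0 $$ (k,i) = complex_of_real (sqrt (5 / real d) * clebsch_gordan 2 (of_int 0) (spinJ d) (mval d i) (spinJ d) (mval d k))"
    by (simp only: T_idx[OF ki] if_P[OF c])
  also have "\<dots> = complex_of_real (sqrt (5 / real d) * (A0 (d - 1) * ((real k * (real k - 1) + real b * (real b - 1)) / 2 - 2 * real k * real b)))"
    by (simp only: sj mi mk of_int_0 cg)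
  also have "\<dots> = complex_of_real (c5 d * (A0 (d - 1) * ((real k * (real k - 1) + real (d - 1 - k) * (real (d - 1 - k) - 1)) / 2 - 2 * real k * real (d - 1 - k))))"
    unfolding c5_def b_def by (rule refl)
  finally show ?thesis using True by simp
next
  case False
  then have "\<not> (mval d k = mval d i + of_int 0)" by (simp add: mval_def)
  then show ?thesis using False T_idx[OF ki, of 0] by simp
qed

lemma T_p1: assumes d: "d \<ge> 3" and ki: "k < d" "i < d"
  shows "spin_tensor d 2 1 $$ (k,i) = (if k = i + 1 then
     complex_of_real (c5 d * (A0 (d - 1) * sqrt 6 * sqrt (real ((i + 1) * (d - 1 - i))) * ((real (d - 1 - i - 1) - real i) / 2))) else 0)"
proof (cases "k = i + 1")
  case True
  define b where "b = d - 1 - i - 1"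
  have N: "d - 1 = i + b + 1" "d - 1 \<ge> 2" using d ki True by (auto simp: b_def)
  have c: "mval d k = mval d i + of_int 1" using mval_cond[of d k i 1] d True by simp
  have cg: "clebsch_gordan 2 1 (real (d - 1) / 2) (real i - real (d - 1) / 2) (real (d - 1) / 2) (real (i + 1) - real (d - 1) / 2)
     = A0 (d - 1) * sqrt 6 * sqrt (real ((i + 1) * (b + 1))) * ((real b - real i) / 2)"
    by (rule cg_p1[OF N])
  have b1: "b + 1 = d - 1 - i" using N by simp
  have sj: "spinJ d = real (d - 1) / 2" using d by (simp add: spinJ_eq)
  have mi: "mval d i = real i - real (d - 1) / 2" using d by (simp add: mval_eq)
  have mk: "mval d k = real (i + 1) - real (d - 1) / 2" using d True by (simp add: mval_eq)
  have "spin_tensor d 2 1 $$ (k,i) = complex_of_real (sqrt (5 / real d) * clebsch_gordan 2 (of_int 1) (spinJ d) (mval d i) (spinJ d) (mval d k))"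
    by (simp only: T_idx[OF ki] if_P[OF c])
  also have "\<dots> = complex_of_real (sqrt (5 / real d) * (A0 (d - 1) * sqrt 6 * sqrt (real ((i + 1) * (b + 1))) * ((real b - real i) / 2)))"
    by (simp only: sj mi mk of_int_1 cg)
  also have "\<dots> = complex_of_real (c5 d * (A0 (d - 1) * sqrt 6 * sqrt (real ((i + 1) * (d - 1 - i))) * ((real (d - 1 - i - 1) - real i) / 2)))"
    unfolding c5_def b1 unfolding b_def by (rule refl)
  finally show ?thesis using True by simp
next
  case False
  then have "\<not> (mval d k = mval d i + of_int 1)" using mval_cond[of d k i 1] d by simp
  then show ?thesis using False T_idx[OF ki, of 1] by simp
qed

lemma T_p2: assumes d: "d \<ge> 3" and ki: "k < d" "i < d"
  shows "spin_tensor d 2 2 $$ (k,i) = (if k = i + 2 then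
     complex_of_real (c5 d * (A0 (d - 1) * (sqrt 24 / 4) * sqrt (real ((i + 2) * (i + 1) * (d - 1 - i) * (d - 1 - i - 1))))) else 0)"
proof (cases "k = i + 2")
  case True
  define b where "b = d - 1 - i - 2"
  have N: "d - 1 = i + b + 2" using d ki True by (auto simp: b_def)
  have c: "mval d k = mval d i + of_int 2" using mval_cond[of d k i 2] d True by simp
  have cg: "clebsch_gordan 2 2 (real (d - 1) / 2) (real i - real (d - 1) / 2) (real (d - 1) / 2) (real (i + 2) - real (d - 1) / 2)
     = A0 (d - 1) * (sqrt 24 / 4) * sqrt (real ((i + 2) * (i + 1) * (b + 2) * (b + 1)))"
    by (rule cg_p2[OF N])
  have b1: "b + 2 = d - 1 - i" "b + 1 = d - 1 - i - 1" using N by simp_all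
  have sj: "spinJ d = real (d - 1) / 2" using d by (simp add: spinJ_eq)
  have mi: "mval d i = real i - real (d - 1) / 2" using d by (simp add: mval_eq)
  have mk: "mval d k = real (i + 2) - real (d - 1) / 2" using d True by (simp add: mval_eq)
  have "spin_tensor d 2 2 $$ (k,i) = complex_of_real (sqrt (5 / real d) * clebsch_gordan 2 (of_int 2) (spinJ d) (mval d i) (spinJ d) (mval d k))"
    by (simp only: T_idx[OF ki] if_P[OF c])
  also have "\<dots> = complex_of_real (sqrt (5 / real d) * (A0 (d - 1) * (sqrt 24 / 4) * sqrt (real ((i + 2) * (i + 1) * (b + 2) * (b + 1)))))"
    by (simp only: sj mi mk of_int_numeral cg)
  also have "\<dots> = complex_of_real (c5 d * (A0 (d - 1) * (sqrt 24 / 4) * sqrt (real ((i + 2) * (i + 1) * (d - 1 - i) * (d - 1 - i - 1)))))"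
    unfolding c5_def b1 by (rule refl)
  finally show ?thesis using True by simp
next
  case False
  then have "\<not> (mval d k = mval d i + of_int 2)" using mval_cond[of d k i 2] d by simp
  then show ?thesis using False T_idx[OF ki, of 2] by simp
qed


declare index_mult_mat(1)[simp del]

lemma trace_minus: "A \<in> carrier_mat d d \<Longrightarrow> B \<in> carrier_mat d d \<Longrightarrow> trace (A - B) = trace A - trace B"
  by (simp add: trace_def sum_subtractf)

lemma trace_mult_comm: assumes "A \<in> carrier_mat d d" "B \<in> carrier_mat d d"
  shows "trace (A * B) = trace (B * A)"
proof -
  have "trace (A * B) - trace (B * A) = trace (A * B - B * A)"
    by (rule trace_minus[symmetric]) (use assms in auto)
  also have "\<dots> = 0" by (rule trace_comm[OF assms])
  finally show ?thesis by simp
qed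

lemma tr_cyc: assumes A: "A \<in> carrier_mat d d" and B: "B \<in> carrier_mat d d" and C: "C \<in> carrier_mat d d"
  shows "trace ((A * B - B * A) * C) = trace (B * (C * A - A * C))"
proof -
  have AB: "A * B \<in> carrier_mat d d" "B * A \<in> carrier_mat d d" "C * A \<in> carrier_mat d d" "A * C \<in> carrier_mat d d"
    "B * C \<in> carrier_mat d d"
    using A B C by auto
  have l: "(A * B - B * A) * C = A * B * C - B * A * C"
    using AB C by (simp add: minus_mult_distrib_mat)
  have "B * (C * A - A * C) = B * (C * A) - B * (A * C)"
    by (rule mult_minus_distrib_mat[OF B AB(3) AB(4)])
  also have "B * (C * A) = B * C * A" by (rule assoc_mult_mat[symmetric, OF B C A])
  also have "B * (A * C) = B * A * C" by (rule assoc_mult_mat[symmetric, OF B A C])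
  finally have r: "B * (C * A - A * C) = B * C * A - B * A * C" .
  have "trace (A * B * C) = trace (A * (B * C))" using A B C by (simp add: assoc_mult_mat)
  also have "\<dots> = trace ((B * C) * A)" by (rule trace_mult_comm[OF A AB(5)])
  finally have t: "trace (A * B * C) = trace (B * C * A)" .
  have c3: "A * B * C \<in> carrier_mat d d" "B * A * C \<in> carrier_mat d d" "B * C * A \<in> carrier_mat d d"
    using A B C by auto
  have "trace (A * B * C - B * A * C) = trace (A * B * C) - trace (B * A * C)" by (rule trace_minus[OF c3(1,2)])
  also have "\<dots> = trace (B * C * A) - trace (B * A * C)" unfolding t ..
  also have "\<dots> = trace (B * C * A - B * A * C)" by (rule trace_minus[OF c3(3,2), symmetric])
  finally show ?thesis unfolding l r .
qed

lemma tr_band: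
  assumes h: "h \<in> carrier_mat d d" and W: "W \<in> carrier_mat d d"
    and band: "\<And>k i. k < d \<Longrightarrow> i < d \<Longrightarrow> int i - int k \<noteq> p \<Longrightarrow> W $$ (k,i) = 0"
  shows "trace (mat d d (\<lambda>(i,j). if int i - int j = p then h $$ (i,j) else 0) * W) = trace (h * W)"
proof -
  have "\<And>i. i < d \<Longrightarrow> (mat d d (\<lambda>(i,j). if int i - int j = p then h $$ (i,j) else 0) * W) $$ (i,i) = (h * W) $$ (i,i)"
  proof -
    fix i assume i: "i < d"
    have "(mat d d (\<lambda>(i,j). if int i - int j = p then h $$ (i,j) else 0) * W) $$ (i,i)
        = (\<Sum>k<d. (if int i - int k = p then h $$ (i,k) else 0) * W $$ (k,i))"
      using i W by (simp add: mult_entry[OF _ W])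
    also have "\<dots> = (\<Sum>k<d. h $$ (i,k) * W $$ (k,i))"
      using band i by (intro sum.cong) auto
    also have "\<dots> = (h * W) $$ (i,i)" using i h W by (simp add: mult_entry)
    finally show "(mat d d (\<lambda>(i,j). if int i - int j = p then h $$ (i,j) else 0) * W) $$ (i,i) = (h * W) $$ (i,i)" .
  qed
  then show ?thesis using h W by (simp add: trace_def)
qed

lemma beta_trace: assumes Y: "Y \<in> carrier_mat d d" and d: "d \<ge> 1"
  shows "beta (d - 1) (\<lambda>y. Y $$ (y,y)) g = trace (Y * dmat d g)"
proof -
  have "{..d - 1} = {..<d}" using d by auto
  then show ?thesis using Y by (simp add: beta_def trace_def mult_dmat)
qed

lemma trace_smult_right: "h \<in> carrier_mat d d \<Longrightarrow> T \<in> carrier_mat d d \<Longrightarrow> trace (h * (c \<cdot>\<^sub>m T)) = c * trace (h * T)"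
  by (simp add: trace_def sum_distrib_left mult_entry algebra_simps)

lemma spin_carrier[simp]: "spin_tensor d k q \<in> carrier_mat d d" by (simp add: spin_tensor_def)
lemma spin_dims[simp]: "dim_row (spin_tensor d k q) = d" "dim_col (spin_tensor d k q) = d" by (simp_all add: spin_tensor_def)

lemma vv_diff: "vv N k - vv N (k + 1) = complex_of_real (6 * real N - 12 * real k - 6)"
  by (simp add: vv_def algebra_simps power2_eq_square)

lemma W_m1:
  assumes d: "d \<ge> 3"
  shows "dmat d (vv (d - 1)) * Jminus d - Jminus d * dmat d (vv (d - 1)) =
     complex_of_real (-12 / (c5 d * A0 (d - 1) * sqrt 6)) \<cdot>\<^sub>m spin_tensor d 2 (-1)"
proof (rule eq_matI)
  fix k i assume "k < dim_row (complex_of_real (-12 / (c5 d * A0 (d - 1) * sqrt 6)) \<cdot>\<^sub>m spin_tensor d 2 (-1))"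
    "i < dim_col (complex_of_real (-12 / (c5 d * A0 (d - 1) * sqrt 6)) \<cdot>\<^sub>m spin_tensor d 2 (-1))"
  then have ki: "k < d" "i < d" by (auto simp: spin_tensor_def)
  have e: "(dmat d (vv (d - 1)) * Jminus d - Jminus d * dmat d (vv (d - 1))) $$ (k,i)
     = vv (d - 1) k * Jminus d $$ (k,i) - Jminus d $$ (k,i) * vv (d - 1) i"
    using ki by (simp add: comm_entry dmat_mult mult_dmat)
  show "(dmat d (vv (d - 1)) * Jminus d - Jminus d * dmat d (vv (d - 1))) $$ (k,i) =
     (complex_of_real (-12 / (c5 d * A0 (d - 1) * sqrt 6)) \<cdot>\<^sub>m spin_tensor d 2 (-1)) $$ (k,i)"
  proof (cases "i = k + 1")
    case True
    have pos: "c5 d > 0" "A0 (d - 1) > 0" "sqrt 6 > (0::real)" using d by (auto simp: c5_pos A0_pos)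
    have rk: "real (d - 1 - k - 1) = real (d - 1) - real k - 1" using ki True by (simp add: of_nat_diff)
    have S: "sqrt (real ((k + 1) * (d - 1 - k))) = sqrt (real ((d - 1 - k) * (k + 1)))" by (simp add: mult.commute)
    have "(dmat d (vv (d - 1)) * Jminus d - Jminus d * dmat d (vv (d - 1))) $$ (k,i)
       = (vv (d - 1) k - vv (d - 1) (k + 1)) * aa d k" using e ki True by (simp add: Jminus_idx algebra_simps)
    also have "\<dots> = complex_of_real ((6 * real (d - 1) - 12 * real k - 6) * sqrt (real ((d - 1 - k) * (k + 1))))"
      unfolding vv_diff aa_eq[OF ki(1)] of_real_mult by (rule refl)
    also have "\<dots> = complex_of_real (-12 / (c5 d * A0 (d - 1) * sqrt 6) * (c5 d * (A0 (d - 1) * sqrt 6 * sqrt (real ((k + 1) * (d - 1 - k))) * ((real k - real (d - 1 - k - 1)) / 2))))"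
      unfolding rk S using pos by (simp add: field_simps)
    also have "\<dots> = complex_of_real (-12 / (c5 d * A0 (d - 1) * sqrt 6)) * complex_of_real (c5 d * (A0 (d - 1) * sqrt 6 * sqrt (real ((k + 1) * (d - 1 - k))) * ((real k - real (d - 1 - k - 1)) / 2)))"
      by (simp only: of_real_mult)
    also have "\<dots> = complex_of_real (-12 / (c5 d * A0 (d - 1) * sqrt 6)) * spin_tensor d 2 (-1) $$ (k,i)"
      by (simp only: T_m1[OF d ki] if_P[OF True])
    also have "\<dots> = (complex_of_real (-12 / (c5 d * A0 (d - 1) * sqrt 6)) \<cdot>\<^sub>m spin_tensor d 2 (-1)) $$ (k,i)"
      using ki by simp
    finally show ?thesis .
  next
    case False
    then show ?thesis using e ki by (simp add: Jminus_idx T_m1[OF d ki])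
  qed
qed auto


declare index_mult_mat(1)[simp del]

lemma chain1:
  assumes M: "lieC d M" and Jp: "Jplus d \<in> M" and Jm: "Jminus d \<in> M" and h: "h \<in> M" and A: "A \<in> M"
    and d: "d \<ge> 1"
    and band: "\<And>k i. k < d \<Longrightarrow> i < d \<Longrightarrow> int i - int k \<noteq> p \<Longrightarrow>
        (dmat d (vv (d - 1)) * A - A * dmat d (vv (d - 1))) $$ (k,i) = 0"
    and nz: "trace (h * (dmat d (vv (d - 1)) * A - A * dmat d (vv (d - 1)))) \<noteq> 0"
  shows "\<exists>f. dmat d f \<in> M \<and> beta (d - 1) f (vv (d - 1)) \<noteq> 0"
proof -
  let ?D = "dmat d (vv (d - 1))"
  let ?H = "mat d d (\<lambda>(i,j). if int i - int j = p then h $$ (i,j) else 0)"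
  have hc: "h \<in> carrier_mat d d" and Ac: "A \<in> carrier_mat d d" using M h A lieC_carrier by blast+
  have HM: "?H \<in> M" by (rule band_in[OF M Jp Jm h])
  have Hc: "?H \<in> carrier_mat d d" by simp
  let ?Y = "A * ?H - ?H * A"
  have YM: "?Y \<in> M" by (rule lieC_comm[OF M A HM])
  have Yc: "?Y \<in> carrier_mat d d" using Ac Hc by auto
  have "dmat d (\<lambda>y. ?Y $$ (y,y)) \<in> M" by (rule diag_in[OF M Jp Jm YM])
  moreover have "beta (d - 1) (\<lambda>y. ?Y $$ (y,y)) (vv (d - 1)) \<noteq> 0"
  proof -
    have "beta (d - 1) (\<lambda>y. ?Y $$ (y,y)) (vv (d - 1)) = trace (?Y * ?D)" by (rule beta_trace[OF Yc d])
    also have "\<dots> = trace (?H * (?D * A - A * ?D))" by (rule tr_cyc[OF Ac Hc dmat_carrier])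
    also have "\<dots> = trace (h * (?D * A - A * ?D))"
      by (rule tr_band[OF hc]) (use Ac band in auto)
    finally show ?thesis using nz by simp
  qed
  ultimately show ?thesis by blast
qed

lemma chain2:
  assumes M: "lieC d M" and Jp: "Jplus d \<in> M" and Jm: "Jminus d \<in> M" and h: "h \<in> M" and A: "A \<in> M"
    and d: "d \<ge> 1"
    and band: "\<And>k i. k < d \<Longrightarrow> i < d \<Longrightarrow> int i - int k \<noteq> p \<Longrightarrow>
        ((dmat d (vv (d - 1)) * A - A * dmat d (vv (d - 1))) * A - A * (dmat d (vv (d - 1)) * A - A * dmat d (vv (d - 1)))) $$ (k,i) = 0"
    and nz: "trace (h * ((dmat d (vv (d - 1)) * A - A * dmat d (vv (d - 1))) * A - A * (dmat d (vv (d - 1)) * A - A * dmat d (vv (d - 1))))) \<noteq> 0"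
  shows "\<exists>f. dmat d f \<in> M \<and> beta (d - 1) f (vv (d - 1)) \<noteq> 0"
proof -
  let ?D = "dmat d (vv (d - 1))"
  let ?V = "?D * A - A * ?D"
  let ?H = "mat d d (\<lambda>(i,j). if int i - int j = p then h $$ (i,j) else 0)"
  have hc: "h \<in> carrier_mat d d" and Ac: "A \<in> carrier_mat d d" using M h A lieC_carrier by blast+
  have Vc: "?V \<in> carrier_mat d d" using Ac by auto
  have HM: "?H \<in> M" by (rule band_in[OF M Jp Jm h])
  have Hc: "?H \<in> carrier_mat d d" by simp
  let ?Y = "A * ?H - ?H * A"
  have YM: "?Y \<in> M" by (rule lieC_comm[OF M A HM])
  have Yc: "?Y \<in> carrier_mat d d" using Ac Hc by auto
  let ?Z = "A * ?Y - ?Y * A"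
  have ZM: "?Z \<in> M" by (rule lieC_comm[OF M A YM])
  have Zc: "?Z \<in> carrier_mat d d" using Ac Yc by auto
  have "dmat d (\<lambda>y. ?Z $$ (y,y)) \<in> M" by (rule diag_in[OF M Jp Jm ZM])
  moreover have "beta (d - 1) (\<lambda>y. ?Z $$ (y,y)) (vv (d - 1)) \<noteq> 0"
  proof -
    have "beta (d - 1) (\<lambda>y. ?Z $$ (y,y)) (vv (d - 1)) = trace (?Z * ?D)" by (rule beta_trace[OF Zc d])
    also have "\<dots> = trace (?Y * ?V)" by (rule tr_cyc[OF Ac Yc dmat_carrier])
    also have "\<dots> = trace (?H * (?V * A - A * ?V))" by (rule tr_cyc[OF Ac Hc Vc])
    also have "\<dots> = trace (h * (?V * A - A * ?V))"
      by (rule tr_band[OF hc]) (use Ac Vc band in auto)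
    finally show ?thesis using nz by simp
  qed
  ultimately show ?thesis by blast
qed

lemma chain0:
  assumes M: "lieC d M" and Jp: "Jplus d \<in> M" and Jm: "Jminus d \<in> M" and h: "h \<in> M"
    and d: "d \<ge> 1" and nz: "trace (h * dmat d (vv (d - 1))) \<noteq> 0"
  shows "\<exists>f. dmat d f \<in> M \<and> beta (d - 1) f (vv (d - 1)) \<noteq> 0"
proof -
  have hc: "h \<in> carrier_mat d d" using M h lieC_carrier by blast
  have "dmat d (\<lambda>y. h $$ (y,y)) \<in> M" by (rule diag_in[OF M Jp Jm h])
  moreover have "beta (d - 1) (\<lambda>y. h $$ (y,y)) (vv (d - 1)) = trace (h * dmat d (vv (d - 1)))"
    by (rule beta_trace[OF hc d])
  ultimately show ?thesis using nz by auto
qed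


declare index_mult_mat(1)[simp del]

lemma vv_diff2: "vv N (k + 1) - vv N k = complex_of_real (12 * real k + 6 - 6 * real N)"
  by (simp add: vv_def algebra_simps power2_eq_square)

lemma W_0:
  assumes d: "d \<ge> 3"
  shows "dmat d (vv (d - 1)) = complex_of_real (2 / (c5 d * A0 (d - 1))) \<cdot>\<^sub>m spin_tensor d 2 0"
proof (rule eq_matI)
  fix k i assume "k < dim_row (complex_of_real (2 / (c5 d * A0 (d - 1))) \<cdot>\<^sub>m spin_tensor d 2 0)"
    "i < dim_col (complex_of_real (2 / (c5 d * A0 (d - 1))) \<cdot>\<^sub>m spin_tensor d 2 0)"
  then have ki: "k < d" "i < d" by auto
  show "dmat d (vv (d - 1)) $$ (k,i) = (complex_of_real (2 / (c5 d * A0 (d - 1))) \<cdot>\<^sub>m spin_tensor d 2 0) $$ (k,i)"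
  proof (cases "i = k")
    case True
    have pos: "c5 d > 0" "A0 (d - 1) > 0" using d by (auto simp: c5_pos A0_pos)
    have rk: "real (d - 1 - k) = real (d - 1) - real k" using ki by (simp add: of_nat_diff)
    have "dmat d (vv (d - 1)) $$ (k,i) = vv (d - 1) k" using ki True by (simp add: dmat_idx)
    also have "\<dots> = complex_of_real (6 * real k ^ 2 - 6 * real (d - 1) * real k + real (d - 1) * (real (d - 1) - 1))"
      by (simp add: vv_def)
    also have "\<dots> = complex_of_real (2 / (c5 d * A0 (d - 1)) * (c5 d * (A0 (d - 1) * ((real k * (real k - 1) + real (d - 1 - k) * (real (d - 1 - k) - 1)) / 2 - 2 * real k * real (d - 1 - k)))))"
      unfolding rk using pos by (simp add: field_simps power2_eq_square)
    also have "\<dots> = complex_of_real (2 / (c5 d * A0 (d - 1))) * complex_of_real (c5 d * (A0 (d - 1) * ((real k * (real k - 1) + real (d - 1 - k) * (real (d - 1 - k) - 1)) / 2 - 2 * real k * real (d - 1 - k))))"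
      by (simp only: of_real_mult)
    also have "\<dots> = complex_of_real (2 / (c5 d * A0 (d - 1))) * spin_tensor d 2 0 $$ (k,i)"
      by (simp only: T_0[OF d ki] if_P[OF True])
    also have "\<dots> = (complex_of_real (2 / (c5 d * A0 (d - 1))) \<cdot>\<^sub>m spin_tensor d 2 0) $$ (k,i)"
      using ki by simp
    finally show ?thesis .
  next
    case False
    then show ?thesis using ki by (simp add: dmat_idx T_0[OF d ki])
  qed
qed auto

lemma W_p1:
  assumes d: "d \<ge> 3"
  shows "dmat d (vv (d - 1)) * Jplus d - Jplus d * dmat d (vv (d - 1)) =
     complex_of_real (-12 / (c5 d * A0 (d - 1) * sqrt 6)) \<cdot>\<^sub>m spin_tensor d 2 1"
proof (rule eq_matI)
  fix k i assume "k < dim_row (complex_of_real (-12 / (c5 d * A0 (d - 1) * sqrt 6)) \<cdot>\<^sub>m spin_tensor d 2 1)"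
    "i < dim_col (complex_of_real (-12 / (c5 d * A0 (d - 1) * sqrt 6)) \<cdot>\<^sub>m spin_tensor d 2 1)"
  then have ki: "k < d" "i < d" by auto
  have e: "(dmat d (vv (d - 1)) * Jplus d - Jplus d * dmat d (vv (d - 1))) $$ (k,i)
     = vv (d - 1) k * Jplus d $$ (k,i) - Jplus d $$ (k,i) * vv (d - 1) i"
    using ki by (simp add: comm_entry dmat_mult mult_dmat)
  show "(dmat d (vv (d - 1)) * Jplus d - Jplus d * dmat d (vv (d - 1))) $$ (k,i) =
     (complex_of_real (-12 / (c5 d * A0 (d - 1) * sqrt 6)) \<cdot>\<^sub>m spin_tensor d 2 1) $$ (k,i)"
  proof (cases "k = i + 1")
    case True
    have pos: "c5 d > 0" "A0 (d - 1) > 0" "sqrt 6 > (0::real)" using d by (auto simp: c5_pos A0_pos)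
    have rk: "real (d - 1 - i - 1) = real (d - 1) - real i - 1" using ki True by (simp add: of_nat_diff)
    have S: "sqrt (real ((i + 1) * (d - 1 - i))) = sqrt (real ((d - 1 - i) * (i + 1)))" by (simp add: mult.commute)
    have "(dmat d (vv (d - 1)) * Jplus d - Jplus d * dmat d (vv (d - 1))) $$ (k,i)
       = (vv (d - 1) (i + 1) - vv (d - 1) i) * aa d i" using e ki True by (simp add: Jplus_idx algebra_simps)
    also have "\<dots> = complex_of_real ((12 * real i + 6 - 6 * real (d - 1)) * sqrt (real ((d - 1 - i) * (i + 1))))"
      unfolding vv_diff2 aa_eq[OF ki(2)] of_real_mult by (rule refl)
    also have "\<dots> = complex_of_real (-12 / (c5 d * A0 (d - 1) * sqrt 6) * (c5 d * (A0 (d - 1) * sqrt 6 * sqrt (real ((i + 1) * (d - 1 - i))) * ((real (d - 1 - i - 1) - real i) / 2))))"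
      unfolding rk S using pos by (simp add: field_simps)
    also have "\<dots> = complex_of_real (-12 / (c5 d * A0 (d - 1) * sqrt 6)) * complex_of_real (c5 d * (A0 (d - 1) * sqrt 6 * sqrt (real ((i + 1) * (d - 1 - i))) * ((real (d - 1 - i - 1) - real i) / 2)))"
      by (simp only: of_real_mult)
    also have "\<dots> = complex_of_real (-12 / (c5 d * A0 (d - 1) * sqrt 6)) * spin_tensor d 2 1 $$ (k,i)"
      by (simp only: T_p1[OF d ki] if_P[OF True])
    also have "\<dots> = (complex_of_real (-12 / (c5 d * A0 (d - 1) * sqrt 6)) \<cdot>\<^sub>m spin_tensor d 2 1) $$ (k,i)"
      using ki by simp
    finally show ?thesis .
  next
    case False
    then show ?thesis using e ki by (simp add: Jplus_idx T_p1[OF d ki])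
  qed
qed auto

lemma Vm_idx: assumes "a < d" "b < d"
  shows "(dmat d g * Jminus d - Jminus d * dmat d g) $$ (a,b) = (if b = a + 1 then (g a - g (a + 1)) * aa d a else 0)"
  using assms by (simp add: comm_entry dmat_mult mult_dmat Jminus_idx algebra_simps)

lemma Vp_idx: assumes "a < d" "b < d"
  shows "(dmat d g * Jplus d - Jplus d * dmat d g) $$ (a,b) = (if a = b + 1 then (g (b + 1) - g b) * aa d b else 0)"
  using assms by (simp add: comm_entry dmat_mult mult_dmat Jplus_idx algebra_simps)


lemma vv_d2: "vv N k - 2 * vv N (k + 1) + vv N (k + 2) = 12"
  by (simp add: vv_def algebra_simps power2_eq_square)

lemma W_m2:
  assumes d: "d \<ge> 3"
  shows "(dmat d (vv (d - 1)) * Jminus d - Jminus d * dmat d (vv (d - 1))) * Jminus d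
         - Jminus d * (dmat d (vv (d - 1)) * Jminus d - Jminus d * dmat d (vv (d - 1))) =
     complex_of_real (48 / (c5 d * A0 (d - 1) * sqrt 24)) \<cdot>\<^sub>m spin_tensor d 2 (-2)"
  (is "?W = ?R")
proof (rule eq_matI)
  let ?V = "dmat d (vv (d - 1)) * Jminus d - Jminus d * dmat d (vv (d - 1))"
  have Vc: "?V \<in> carrier_mat d d" by (meson Jminus_carrier dmat_carrier minus_carrier_mat mult_carrier_mat)
  fix k i assume "k < dim_row ?R" "i < dim_col ?R"
  then have ki: "k < d" "i < d" by auto
  have e: "?W $$ (k,i) = (if i \<ge> 1 then ?V $$ (k, i - 1) * aa d (i - 1) else 0)
      - (if k + 1 < d then aa d k * ?V $$ (k + 1, i) else 0)"
    using ki Vc by (simp add: comm_entry mult_Jm Jm_mult)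
  show "?W $$ (k,i) = ?R $$ (k,i)"
  proof (cases "i = k + 2")
    case True
    have pos: "c5 d > 0" "A0 (d - 1) > 0" "sqrt 24 > (0::real)" using d by (auto simp: c5_pos A0_pos)
    have k1: "k + 1 < d" using ki True by simp
    have V1: "?V $$ (k, i - 1) = (vv (d - 1) k - vv (d - 1) (k + 1)) * aa d k"
      by (subst Vm_idx) (use ki True in auto)
    have V2: "?V $$ (k + 1, i) = (vv (d - 1) (k + 1) - vv (d - 1) (k + 2)) * aa d (k + 1)"
      by (subst Vm_idx) (use ki k1 True in auto)
    have "?W $$ (k,i) = aa d k * aa d (k + 1) * (vv (d - 1) k - 2 * vv (d - 1) (k + 1) + vv (d - 1) (k + 2))"
      unfolding e V1 V2 using True k1 by (simp add: algebra_simps)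
    also have "\<dots> = 12 * aa d k * aa d (k + 1)" unfolding vv_d2 by simp
    also have "\<dots> = complex_of_real (12 * (sqrt (real ((d - 1 - k) * (k + 1))) * sqrt (real ((d - 1 - (k + 1)) * (k + 1 + 1)))))"
      unfolding aa_eq[OF ki(1)] aa_eq[OF k1] by simp
    also have "\<dots> = complex_of_real (48 / (c5 d * A0 (d - 1) * sqrt 24) * (c5 d * (A0 (d - 1) * (sqrt 24 / 4) * sqrt (real ((k + 2) * (k + 1) * (d - 1 - k) * (d - 1 - k - 1))))))"
    proof -
      have gen: "\<And>A B::nat. A * (k + 1) * (B * (k + 1 + 1)) = (k + 2) * (k + 1) * A * B"
        by (simp add: algebra_simps)
      have sub: "d - 1 - (k + 1) = d - 1 - k - 1" by simp
      have ne: "(d - 1 - k) * (k + 1) * ((d - 1 - (k + 1)) * (k + 1 + 1)) = (k + 2) * (k + 1) * (d - 1 - k) * (d - 1 - k - 1)"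
        by (simp only: sub gen)
      have "sqrt (real ((d - 1 - k) * (k + 1))) * sqrt (real ((d - 1 - (k + 1)) * (k + 1 + 1)))
          = sqrt (real ((d - 1 - k) * (k + 1) * ((d - 1 - (k + 1)) * (k + 1 + 1))))"
        by (simp only: real_sqrt_mult[symmetric] of_nat_mult[symmetric])
      also have "\<dots> = sqrt (real ((k + 2) * (k + 1) * (d - 1 - k) * (d - 1 - k - 1)))" unfolding ne ..
      finally have "sqrt (real ((d - 1 - k) * (k + 1))) * sqrt (real ((d - 1 - (k + 1)) * (k + 1 + 1)))
          = sqrt (real ((k + 2) * (k + 1) * (d - 1 - k) * (d - 1 - k - 1)))" .
      then show ?thesis using pos by (simp add: field_simps)
    qed
    also have "\<dots> = complex_of_real (48 / (c5 d * A0 (d - 1) * sqrt 24)) * complex_of_real (c5 d * (A0 (d - 1) * (sqrt 24 / 4) * sqrt (real ((k + 2) * (k + 1) * (d - 1 - k) * (d - 1 - k - 1)))))"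
      by (simp only: of_real_mult)
    also have "\<dots> = complex_of_real (48 / (c5 d * A0 (d - 1) * sqrt 24)) * spin_tensor d 2 (-2) $$ (k,i)"
      by (simp only: T_m2[OF d ki] if_P[OF True])
    also have "\<dots> = ?R $$ (k,i)" using ki by simp
    finally show ?thesis .
  next
    case False
    have "?W $$ (k,i) = 0"
      unfolding e using ki False by (auto simp: Vm_idx simp del: index_minus_mat)
    then show ?thesis using ki False by (simp add: T_m2[OF d ki])
  qed
qed auto

lemma W_p2:
  assumes d: "d \<ge> 3"
  shows "(dmat d (vv (d - 1)) * Jplus d - Jplus d * dmat d (vv (d - 1))) * Jplus d
         - Jplus d * (dmat d (vv (d - 1)) * Jplus d - Jplus d * dmat d (vv (d - 1))) =
     complex_of_real (48 / (c5 d * A0 (d - 1) * sqrt 24)) \<cdot>\<^sub>m spin_tensor d 2 2"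
  (is "?W = ?R")
proof (rule eq_matI)
  let ?V = "dmat d (vv (d - 1)) * Jplus d - Jplus d * dmat d (vv (d - 1))"
  have Vc: "?V \<in> carrier_mat d d" by (meson Jplus_carrier dmat_carrier minus_carrier_mat mult_carrier_mat)
  fix k i assume "k < dim_row ?R" "i < dim_col ?R"
  then have ki: "k < d" "i < d" by auto
  have e: "?W $$ (k,i) = (if i + 1 < d then ?V $$ (k, i + 1) * aa d i else 0)
      - (if k \<ge> 1 then aa d (k - 1) * ?V $$ (k - 1, i) else 0)"
    using ki Vc by (simp add: comm_entry mult_Jp Jp_mult)
  show "?W $$ (k,i) = ?R $$ (k,i)"
  proof (cases "k = i + 2")
    case True
    have pos: "c5 d > 0" "A0 (d - 1) > 0" "sqrt 24 > (0::real)" using d by (auto simp: c5_pos A0_pos)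
    have i1: "i + 1 < d" using ki True by simp
    have V1: "?V $$ (k, i + 1) = (vv (d - 1) (i + 2) - vv (d - 1) (i + 1)) * aa d (i + 1)"
      by (subst Vp_idx) (use ki i1 True in auto)
    have V2: "?V $$ (k - 1, i) = (vv (d - 1) (i + 1) - vv (d - 1) i) * aa d i"
      by (subst Vp_idx) (use ki True in auto)
    have "?W $$ (k,i) = aa d i * aa d (i + 1) * (vv (d - 1) i - 2 * vv (d - 1) (i + 1) + vv (d - 1) (i + 2))"
      unfolding e V1 V2 using True i1 by (simp add: algebra_simps)
    also have "\<dots> = 12 * aa d i * aa d (i + 1)" unfolding vv_d2 by simp
    also have "\<dots> = complex_of_real (12 * (sqrt (real ((d - 1 - i) * (i + 1))) * sqrt (real ((d - 1 - (i + 1)) * (i + 1 + 1)))))"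
      unfolding aa_eq[OF ki(2)] aa_eq[OF i1] by simp
    also have "\<dots> = complex_of_real (48 / (c5 d * A0 (d - 1) * sqrt 24) * (c5 d * (A0 (d - 1) * (sqrt 24 / 4) * sqrt (real ((i + 2) * (i + 1) * (d - 1 - i) * (d - 1 - i - 1))))))"
    proof -
      have gen: "\<And>A B::nat. A * (i + 1) * (B * (i + 1 + 1)) = (i + 2) * (i + 1) * A * B"
        by (simp add: algebra_simps)
      have sub: "d - 1 - (i + 1) = d - 1 - i - 1" by simp
      have ne: "(d - 1 - i) * (i + 1) * ((d - 1 - (i + 1)) * (i + 1 + 1)) = (i + 2) * (i + 1) * (d - 1 - i) * (d - 1 - i - 1)"
        by (simp only: sub gen)
      have "sqrt (real ((d - 1 - i) * (i + 1))) * sqrt (real ((d - 1 - (i + 1)) * (i + 1 + 1)))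
          = sqrt (real ((d - 1 - i) * (i + 1) * ((d - 1 - (i + 1)) * (i + 1 + 1))))"
        by (simp only: real_sqrt_mult[symmetric] of_nat_mult[symmetric])
      also have "\<dots> = sqrt (real ((i + 2) * (i + 1) * (d - 1 - i) * (d - 1 - i - 1)))" unfolding ne ..
      finally have "sqrt (real ((d - 1 - i) * (i + 1))) * sqrt (real ((d - 1 - (i + 1)) * (i + 1 + 1)))
          = sqrt (real ((i + 2) * (i + 1) * (d - 1 - i) * (d - 1 - i - 1)))" .
      then show ?thesis using pos by (simp add: field_simps)
    qed
    also have "\<dots> = complex_of_real (48 / (c5 d * A0 (d - 1) * sqrt 24)) * complex_of_real (c5 d * (A0 (d - 1) * (sqrt 24 / 4) * sqrt (real ((i + 2) * (i + 1) * (d - 1 - i) * (d - 1 - i - 1)))))"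
      by (simp only: of_real_mult)
    also have "\<dots> = complex_of_real (48 / (c5 d * A0 (d - 1) * sqrt 24)) * spin_tensor d 2 2 $$ (k,i)"
      by (simp only: T_p2[OF d ki] if_P[OF True])
    also have "\<dots> = ?R $$ (k,i)" using ki by simp
    finally show ?thesis .
  next
    case False
    have "?W $$ (k,i) = 0"
      unfolding e using ki False by (auto simp: Vp_idx simp del: index_minus_mat)
    then show ?thesis using ki False by (simp add: T_p2[OF d ki])
  qed
qed auto


declare index_mult_mat(1)[simp del]

lemma trace_W:
  assumes "h \<in> carrier_mat d d" "W = complex_of_real K \<cdot>\<^sub>m spin_tensor d 2 q" "K \<noteq> 0"
    "trace (h * spin_tensor d 2 q) \<noteq> 0"
  shows "trace (h * W) \<noteq> 0"
  using assms by (simp add: trace_smult_right)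

lemma diag_exists:
  assumes M: "lieC d M" and Jp: "Jplus d \<in> M" and Jm: "Jminus d \<in> M" and h: "h \<in> M"
    and d: "d \<ge> 3" and q: "-2 \<le> q" "q \<le> 2" and nz: "trace (h * spin_tensor d 2 q) \<noteq> 0"
  shows "\<exists>f. dmat d f \<in> M \<and> beta (d - 1) f (vv (d - 1)) \<noteq> 0"
proof -
  have hc: "h \<in> carrier_mat d d" using M h lieC_carrier by blast
  have d1: "d \<ge> 1" using d by simp
  have pos: "c5 d > 0" "A0 (d - 1) > 0" "sqrt 6 > (0::real)" "sqrt 24 > (0::real)" using d by (auto simp: c5_pos A0_pos)
  have K1: "-12 / (c5 d * A0 (d - 1) * sqrt 6) \<noteq> 0" using pos by simp
  have K2: "48 / (c5 d * A0 (d - 1) * sqrt 24) \<noteq> 0" using pos by simp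
  have K0: "2 / (c5 d * A0 (d - 1)) \<noteq> 0" using pos by simp
  have "q = -2 \<or> q = -1 \<or> q = 0 \<or> q = 1 \<or> q = 2" using q by auto
  then show ?thesis
  proof (elim disjE)
    assume q0: "q = -2"
    show ?thesis
    proof (rule chain2[OF M Jp Jm h Jm d1, of 2])
      fix k i assume ki: "k < d" "i < d" "int i - int k \<noteq> 2"
      then show "((dmat d (vv (d - 1)) * Jminus d - Jminus d * dmat d (vv (d - 1))) * Jminus d
         - Jminus d * (dmat d (vv (d - 1)) * Jminus d - Jminus d * dmat d (vv (d - 1)))) $$ (k,i) = 0"
        unfolding W_m2[OF d] using ki by (simp add: T_m2[OF d ki(1,2)])
    next
      show "trace (h * ((dmat d (vv (d - 1)) * Jminus d - Jminus d * dmat d (vv (d - 1))) * Jminus d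
         - Jminus d * (dmat d (vv (d - 1)) * Jminus d - Jminus d * dmat d (vv (d - 1))))) \<noteq> 0"
        by (rule trace_W[OF hc W_m2[OF d] K2]) (use nz q0 in simp)
    qed
  next
    assume q0: "q = -1"
    show ?thesis
    proof (rule chain1[OF M Jp Jm h Jm d1, of 1])
      fix k i assume ki: "k < d" "i < d" "int i - int k \<noteq> 1"
      then show "(dmat d (vv (d - 1)) * Jminus d - Jminus d * dmat d (vv (d - 1))) $$ (k,i) = 0"
        unfolding W_m1[OF d] using ki by (simp add: T_m1[OF d ki(1,2)])
    next
      show "trace (h * (dmat d (vv (d - 1)) * Jminus d - Jminus d * dmat d (vv (d - 1)))) \<noteq> 0"
        by (rule trace_W[OF hc W_m1[OF d] K1]) (use nz q0 in simp)
    qed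
  next
    assume q0: "q = 0"
    show ?thesis
    proof (rule chain0[OF M Jp Jm h d1])
      show "trace (h * dmat d (vv (d - 1))) \<noteq> 0"
        by (rule trace_W[OF hc W_0[OF d] K0]) (use nz q0 in simp)
    qed
  next
    assume q0: "q = 1"
    show ?thesis
    proof (rule chain1[OF M Jp Jm h Jp d1, of "-1"])
      fix k i assume ki: "k < d" "i < d" "int i - int k \<noteq> -1"
      then show "(dmat d (vv (d - 1)) * Jplus d - Jplus d * dmat d (vv (d - 1))) $$ (k,i) = 0"
        unfolding W_p1[OF d] using ki by (simp add: T_p1[OF d ki(1,2)])
    next
      show "trace (h * (dmat d (vv (d - 1)) * Jplus d - Jplus d * dmat d (vv (d - 1)))) \<noteq> 0"
        by (rule trace_W[OF hc W_p1[OF d] K1]) (use nz q0 in simp)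
    qed
  next
    assume q0: "q = 2"
    show ?thesis
    proof (rule chain2[OF M Jp Jm h Jp d1, of "-2"])
      fix k i assume ki: "k < d" "i < d" "int i - int k \<noteq> -2"
      then show "((dmat d (vv (d - 1)) * Jplus d - Jplus d * dmat d (vv (d - 1))) * Jplus d
         - Jplus d * (dmat d (vv (d - 1)) * Jplus d - Jplus d * dmat d (vv (d - 1)))) $$ (k,i) = 0"
        unfolding W_p2[OF d] using ki by (simp add: T_p2[OF d ki(1,2)])
    next
      show "trace (h * ((dmat d (vv (d - 1)) * Jplus d - Jplus d * dmat d (vv (d - 1))) * Jplus d
         - Jplus d * (dmat d (vv (d - 1)) * Jplus d - Jplus d * dmat d (vv (d - 1))))) \<noteq> 0"
        by (rule trace_W[OF hc W_p2[OF d] K2]) (use nz q0 in simp)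
    qed
  qed
qed


declare index_mult_mat(1)[simp del]

theorem theorem1:
  fixes d :: nat and h :: "complex mat"
  assumes "d > 2"
    and "h \<in> carrier_mat d d"
    and "hermitian h"
    and "trace h = 0"
    and "\<exists>q::int. -2 \<le> q \<and> q \<le> 2 \<and> trace (h * spin_tensor d 2 q) \<noteq> 0"
  shows "lie_generated d {-\<i> \<cdot>\<^sub>m Jx d, -\<i> \<cdot>\<^sub>m Jy d, -\<i> \<cdot>\<^sub>m h} = su d"
proof -
  define S where "S = {-\<i> \<cdot>\<^sub>m Jx d, -\<i> \<cdot>\<^sub>m Jy d, -\<i> \<cdot>\<^sub>m h}"
  let ?L = "lie_generated d S"
  have Ssu: "S \<subseteq> su d" unfolding S_def using Jx_su Jy_su h_su[OF assms(2,3,4)] by auto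
  have Sc: "S \<subseteq> carrier_mat d d" using Ssu by (auto simp: su_def)
  have L1: "?L \<subseteq> su d" by (rule L_sub_su[OF Ssu])
  define M where "M = LCx d S"
  have M: "lieC d M" unfolding M_def by (rule lieC_LCx[OF Sc])
  have iL: "\<And>Y. Y \<in> ?L \<Longrightarrow> \<i> \<cdot>\<^sub>m Y \<in> M"
  proof -
    fix Y assume Y: "Y \<in> ?L"
    have Yc: "Y \<in> carrier_mat d d" using Y lie_gen_carrier[OF Sc] by auto
    have "0\<^sub>m d d + \<i> \<cdot>\<^sub>m Y \<in> M" unfolding M_def LCx_def using Y by (auto intro: lie_generated.zero)
    moreover have "0\<^sub>m d d + \<i> \<cdot>\<^sub>m Y = \<i> \<cdot>\<^sub>m Y" using Yc by (intro eq_matI) auto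
    ultimately show "\<i> \<cdot>\<^sub>m Y \<in> M" by simp
  qed
  have bk: "\<And>A. A \<in> carrier_mat d d \<Longrightarrow> \<i> \<cdot>\<^sub>m (-\<i> \<cdot>\<^sub>m A) = A"
    by (intro eq_matI) auto
  have JxM: "Jx d \<in> M" using iL[of "-\<i> \<cdot>\<^sub>m Jx d"] bk[of "Jx d"] unfolding S_def
    by (auto intro: lie_generated.gen)
  have JyM: "Jy d \<in> M" using iL[of "-\<i> \<cdot>\<^sub>m Jy d"] bk[of "Jy d"] unfolding S_def
    by (auto intro: lie_generated.gen)
  have hM: "h \<in> M" using iL[of "-\<i> \<cdot>\<^sub>m h"] bk[of h] assms(2) unfolding S_def
    by (auto intro: lie_generated.gen)
  have JpM: "Jplus d \<in> M"
  proof -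
    have "Jx d + \<i> \<cdot>\<^sub>m Jy d \<in> M" by (intro lieC_add[OF M] lieC_smult[OF M] JxM JyM)
    moreover have "Jx d + \<i> \<cdot>\<^sub>m Jy d = Jplus d"
      by (intro eq_matI) (auto simp: Jx_idx Jy_idx Jplus_idx field_simps)
    ultimately show ?thesis by simp
  qed
  have JmM: "Jminus d \<in> M"
  proof -
    have "Jx d + (- \<i>) \<cdot>\<^sub>m Jy d \<in> M" by (intro lieC_add[OF M] lieC_smult[OF M] JxM JyM)
    moreover have "Jx d + (- \<i>) \<cdot>\<^sub>m Jy d = Jminus d"
      by (intro eq_matI) (auto simp: Jx_idx Jy_idx Jminus_idx field_simps)
    ultimately show ?thesis by simp
  qed
  have d3: "d \<ge> 3" using assms(1) by simp
  obtain q :: int where q: "-2 \<le> q" "q \<le> 2" "trace (h * spin_tensor d 2 q) \<noteq> 0" using assms(5) by blast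
  obtain f where f: "dmat d f \<in> M" "beta (d - 1) f (vv (d - 1)) \<noteq> 0"
    using diag_exists[OF M JpM JmM hM d3 q] by blast
  have sl: "\<And>A. A \<in> carrier_mat d d \<Longrightarrow> trace A = 0 \<Longrightarrow> A \<in> M"
    using sl_from_diag[OF M JpM JmM f(1) d3 f(2)] by blast
  have L2: "su d \<subseteq> ?L"
  proof
    fix A assume A: "A \<in> su d"
    then have Ac: "A \<in> carrier_mat d d" "dagger A = - A" "trace A = 0" by (auto simp: su_def)
    have "A \<in> M" using sl Ac by blast
    then obtain X Y where XY: "A = X + \<i> \<cdot>\<^sub>m Y" "X \<in> ?L" "Y \<in> ?L" unfolding M_def LCx_def by blast
    have Xs: "X \<in> su d" "Y \<in> su d" using XY L1 by auto
    then have Xc: "X \<in> carrier_mat d d" "Y \<in> carrier_mat d d" "dagger X = - X" "dagger Y = - Y"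
      by (auto simp: su_def)
    have "A = X"
    proof (rule eq_matI)
      fix a b assume ab: "a < dim_row X" "b < dim_col X"
      then have ab': "a < d" "b < d" using Xc by auto
      have eA: "\<And>a b. a < d \<Longrightarrow> b < d \<Longrightarrow> A $$ (a,b) = X $$ (a,b) + \<i> * Y $$ (a,b)"
        using XY(1) Xc by simp
      have dA: "\<And>a b. a < d \<Longrightarrow> b < d \<Longrightarrow> cnj (A $$ (b,a)) = - A $$ (a,b)"
      proof -
        fix a b assume "a < d" "b < d"
        then have "dagger A $$ (a,b) = cnj (A $$ (b,a))" using Ac by (intro dagger_index) auto
        moreover have "dagger A $$ (a,b) = - A $$ (a,b)" using Ac \<open>a < d\<close> \<open>b < d\<close> by simp
        ultimately show "cnj (A $$ (b,a)) = - A $$ (a,b)" by simp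
      qed
      have dX: "\<And>a b. a < d \<Longrightarrow> b < d \<Longrightarrow> cnj (X $$ (b,a)) = - X $$ (a,b)"
      proof -
        fix a b assume "a < d" "b < d"
        then have "dagger X $$ (a,b) = cnj (X $$ (b,a))" using Xc by (intro dagger_index) auto
        moreover have "dagger X $$ (a,b) = - X $$ (a,b)" using Xc \<open>a < d\<close> \<open>b < d\<close> by simp
        ultimately show "cnj (X $$ (b,a)) = - X $$ (a,b)" by simp
      qed
      have dY: "\<And>a b. a < d \<Longrightarrow> b < d \<Longrightarrow> cnj (Y $$ (b,a)) = - Y $$ (a,b)"
      proof -
        fix a b assume "a < d" "b < d"
        then have "dagger Y $$ (a,b) = cnj (Y $$ (b,a))" using Xc by (intro dagger_index) auto
        moreover have "dagger Y $$ (a,b) = - Y $$ (a,b)" using Xc \<open>a < d\<close> \<open>b < d\<close> by simp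
        ultimately show "cnj (Y $$ (b,a)) = - Y $$ (a,b)" by simp
      qed
      have "cnj (A $$ (b,a)) = cnj (X $$ (b,a)) + cnj (\<i> * Y $$ (b,a))" using eA[OF ab'(2,1)] by simp
      also have "\<dots> = - X $$ (a,b) + \<i> * Y $$ (a,b)" using dX[OF ab'] dY[OF ab'] by simp
      finally have "- A $$ (a,b) = - X $$ (a,b) + \<i> * Y $$ (a,b)" using dA[OF ab'] by simp
      then have "- X $$ (a,b) - \<i> * Y $$ (a,b) = - X $$ (a,b) + \<i> * Y $$ (a,b)" using eA[OF ab'] by simp
      then have "Y $$ (a,b) = 0" by simp
      then show "A $$ (a,b) = X $$ (a,b)" using eA[OF ab'] by simp
    qed (use Ac Xc in auto)
    then show "A \<in> ?L" using XY by simp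
  qed
  show ?thesis unfolding S_def[symmetric] using L1 L2 by blast
qed


end
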